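(* Let $N\ge2$, $\hbar>0$, and for $n\ge1$ define operators $A_n(u)$ ($u\in\mathbb{C}$) acting on functions of $x_1,\dots,x_n$ recursively by $A_{-1}(u)=0$, $A_0(u)=1$, $A_n(u)=(u-p_n)A_{n-1}(u)-e^{x_{n-1}-x_n}A_{n-2}(u)$, where $p_n=-\imath\hbar\,\partial/\partial x_n$. For a function $f$ on $\mathbb{R}^{N-1}$ not growing too fast at infinity and $v\in\mathbb{C}$ let $$(\mathcal{Q}^{(N)}_vf)(x_1,\dots,x_N)=\int_{\mathbb{R}^{N-1}}Q^{(N)}_v(x;y)f(y_1,\dots,y_{N-1})\,dy_1\cdots dy_{N-1},$$ $$Q^{(N)}_v(x;y)=\exp\Big\{\frac{\imath v}{\hbar}\Big(\sum_{i=1}^Nx_i-\sum_{i=1}^{N-1}y_i\Big)-\frac1\hbar\sum_{i=1}^{N-1}\big(e^{x_i-y_i}+e^{y_i-x_{i+1}}\big)\Big\}.$$ Then $$A_N(u)\circ\mathcal{Q}^{(N)}_v=(u-v)\,\mathcal{Q}^{(N)}_v\circ A_{N-1}(u),$$ where on the left $A_N(u)$ acts in the variables $x_1,\dots,x_N$ and on the right $A_{N-1}(u)$ acts in the variables $y_1,\dots,y_{N-1}$.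
   Context: $A_N(u)=\det(u-L_N)$ is the generating function $\sum_{n=0}^N(-1)^nu^{N-n}H^{(N)}_n$ of the commuting Hamiltonians of the $N$-particle open Toda chain, $L_N$ being the tridiagonal Lax matrix with diagonal $p_1,\dots,p_N$, superdiagonal entries $1$ and subdiagonal entries $e^{x_i-x_{i+1}}$. *)

theory Defs
  imports "HOL-Analysis.Analysis"
begin

text \<open>Functions of the variables x_1, x_2, ... are modelled as maps
  (nat \<Rightarrow> real) \<Rightarrow> complex; coordinate x_k is x k (k \<ge> 1).\<close>

type_synonym fn = "(nat \<Rightarrow> real) \<Rightarrow> complex"

definition pd :: "nat \<Rightarrow> fn \<Rightarrow> fn" where
  "pd k g = (\<lambda>x. vector_derivative (\<lambda>t. g (x(k := t))) (at (x k)))"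

fun pds :: "nat list \<Rightarrow> fn \<Rightarrow> fn" where
  "pds [] g = g"
| "pds (k # ks) g = pd k (pds ks g)"

fun Aop :: "real \<Rightarrow> nat \<Rightarrow> complex \<Rightarrow> fn \<Rightarrow> fn" where
  "Aop h 0 u g = g"
| "Aop h (Suc 0) u g = (\<lambda>x. u * g x + \<i> * of_real h * pd 1 g x)"
| "Aop h (Suc (Suc n)) u g =
     (\<lambda>x. u * Aop h (Suc n) u g x + \<i> * of_real h * pd (Suc (Suc n)) (Aop h (Suc n) u g) x
          - of_real (exp (x (Suc n) - x (Suc (Suc n)))) * Aop h n u g x)"

definition Qker :: "real \<Rightarrow> nat \<Rightarrow> complex \<Rightarrow> (nat \<Rightarrow> real) \<Rightarrow> (nat \<Rightarrow> real) \<Rightarrow> complex" where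
  "Qker h N v x y = exp ((\<i> * v / of_real h) * of_real ((\<Sum>i=1..N. x i) - (\<Sum>i=1..<N. y i))
      - of_real ((1 / h) * (\<Sum>i=1..<N. exp (x i - y i) + exp (y i - x (Suc i)))))"

definition Qop :: "real \<Rightarrow> nat \<Rightarrow> complex \<Rightarrow> fn \<Rightarrow> fn" where
  "Qop h N v f = (\<lambda>x. \<integral>y. Qker h N v x y * f y \<partial>(PiM {1..<N} (\<lambda>_. lborel)))"

end

theory Submission
  imports Defs "HOL-Real_Asymp.Real_Asymp" "HOL-Probability.Distributions"
begin

lemma FTC_line:
  fixes f F :: "real \<Rightarrow> complex"
  assumes F: "\<And>t. (F has_vector_derivative f t) (at t)"
    and fc: "continuous_on UNIV f" and fi: "integrable lborel f"
    and top: "(F \<longlongrightarrow> 0) at_top" and bot: "(F \<longlongrightarrow> 0) at_bot"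
  shows "integral\<^sup>L lborel f = 0"
proof -
  have eq: "(LBINT t=ereal (-real n)..ereal (real n). f t) = F (real n) - F (- real n)" for n :: nat
    by (rule interval_integral_FTC_finite)
       (auto intro: continuous_on_subset[OF fc] has_vector_derivative_at_within[OF F])
  have l1: "(\<lambda>n::nat. F (real n)) \<longlonglongrightarrow> 0"
    by (rule filterlim_compose[OF top filterlim_real_sequentially])
  have l2: "(\<lambda>n::nat. F (- real n)) \<longlonglongrightarrow> 0"
    by (rule filterlim_compose[OF bot]) (simp add: filterlim_uminus_at_bot filterlim_real_sequentially)
  have lim1: "(\<lambda>n::nat. (LBINT t=ereal (-real n)..ereal (real n). f t)) \<longlonglongrightarrow> 0"
    unfolding eq using tendsto_diff[OF l1 l2] by simp
  have lim2: "(\<lambda>n::nat. (LBINT t=ereal (-real n)..ereal (real n). f t)) \<longlonglongrightarrow> integral\<^sup>L lborel f"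
  proof -
    have "(\<lambda>n::nat. \<integral>t. indicator {-real n..real n} t *\<^sub>R f t \<partial>lborel) \<longlonglongrightarrow> integral\<^sup>L lborel f"
    proof (rule integral_dominated_convergence[where w="\<lambda>t. norm (f t)"])
      show "f \<in> borel_measurable lborel" using fi by auto
      show "\<And>i. (\<lambda>t. indicator {-real i..real i} t *\<^sub>R f t) \<in> borel_measurable lborel"
        using fi by auto
      show "integrable lborel (\<lambda>t. norm (f t))" using fi by auto
      show "AE t in lborel. (\<lambda>i. indicator {-real i..real i} t *\<^sub>R f t) \<longlonglongrightarrow> f t"
      proof (rule AE_I2)
        fix t :: real
        obtain n0 :: nat where "\<bar>t\<bar> \<le> real n0" using real_arch_simple by blast
        then have "\<forall>\<^sub>F i in sequentially. indicator {-real i..real i} t *\<^sub>R f t = f t"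
          unfolding eventually_sequentially
          by (intro exI[of _ n0]) (auto simp: indicator_def)
        then show "(\<lambda>i. indicator {-real i..real i} t *\<^sub>R f t) \<longlonglongrightarrow> f t"
          by (rule tendsto_eventually)
      qed
      show "\<And>i. AE t in lborel. norm (indicator {-real i..real i} t *\<^sub>R f t) \<le> norm (f t)"
        by (auto simp: indicator_def)
    qed
    then show ?thesis
      by (subst interval_integral_Icc) (auto simp: set_lebesgue_integral_def)
  qed
  from LIMSEQ_unique[OF lim2 lim1] show ?thesis .
qed

lemma asy1: fixes b c :: real assumes "c > 0"
  shows "filterlim (\<lambda>z. b*z + z^2/2 - c*exp z) at_bot at_top"
  using assms by real_asymp

lemma asy2: "((\<lambda>t::real. exp (-(t^2)/2)) \<longlongrightarrow> 0) at_top" "((\<lambda>t::real. exp (-(t^2)/2)) \<longlongrightarrow> 0) at_bot"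
  by real_asymp+

lemma meas_cont:
  fixes g :: "(nat \<Rightarrow> real) \<Rightarrow> 'b::topological_space"
  assumes "continuous_on UNIV g"
  shows "g \<in> borel_measurable (PiM I (\<lambda>_. lborel))"
proof -
  have "(\<lambda>y::nat\<Rightarrow>real. y) \<in> borel_measurable (PiM I (\<lambda>_. lborel))"
  proof (rule measurable_coordinatewise_then_product)
    fix i
    show "(\<lambda>y::nat\<Rightarrow>real. y i) \<in> borel_measurable (PiM I (\<lambda>_. lborel))"
    proof (cases "i \<in> I")
      case True
      then show ?thesis using measurable_component_singleton[OF True, of "\<lambda>_. lborel"] by simp
    next
      case False
      have "(\<lambda>y::nat\<Rightarrow>real. undefined::real) \<in> borel_measurable (PiM I (\<lambda>_. lborel))" by simp
      then show ?thesis
        by (rule measurable_cong[THEN iffD1, rotated]) (use False in \<open>auto simp: space_PiM PiE_def extensional_def\<close>)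
    qed
  qed
  from measurable_comp[OF this borel_measurable_continuous_onI[OF assms]] show ?thesis by (simp add: comp_def)
qed

definition D1 :: "real \<Rightarrow> real \<Rightarrow> real \<Rightarrow> real" where
  "D1 b c t = exp (b * \<bar>t\<bar> - c * (exp t + exp (- t)))"

lemma bdd_above_from_lim:
  fixes \<phi> :: "real \<Rightarrow> real"
  assumes "continuous_on {0..} \<phi>" "filterlim \<phi> at_bot at_top"
  shows "\<exists>B. \<forall>z\<ge>0. \<phi> z \<le> B"
proof -
  from assms(2) have "eventually (\<lambda>z. \<phi> z \<le> 0) at_top"
    by (simp add: filterlim_at_bot)
  then obtain S where S: "\<And>z. z \<ge> S \<Longrightarrow> \<phi> z \<le> 0" by (auto simp: eventually_at_top_linorder)
  have "compact (\<phi> ` {0..max 0 S})"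
    by (rule compact_continuous_image) (auto intro: continuous_on_subset[OF assms(1)])
  then obtain B where B: "\<And>z. z \<in> {0..max 0 S} \<Longrightarrow> \<phi> z \<le> B"
    using compact_imp_bounded bounded_real by (metis abs_le_D1 imageI)
  show ?thesis
  proof (intro exI[of _ "max B 0"] allI impI)
    fix z :: real assume "z \<ge> 0"
    show "\<phi> z \<le> max B 0"
    proof (cases "z \<le> max 0 S")
      case True with B[of z] \<open>z \<ge> 0\<close> show ?thesis by auto
    next
      case False then have "S \<le> z" by simp
      with S[of z] show ?thesis by simp
    qed
  qed
qed

lemma D1_bound:
  assumes "c > 0"
  shows "\<exists>K. \<forall>t. D1 b c t \<le> K * exp (-(t^2)/2)"
proof -
  have "\<exists>B. \<forall>z\<ge>0. b*z + z^2/2 - c*exp z \<le> B"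
    by (rule bdd_above_from_lim) (auto intro!: continuous_intros asy1 assms)
  then obtain B where B: "\<And>z. z \<ge> 0 \<Longrightarrow> b*z + z^2/2 - c*exp z \<le> B" by blast
  show ?thesis
  proof (intro exI[of _ "exp B"] allI)
    fix t :: real
    have e: "exp \<bar>t\<bar> \<le> exp t + exp (- t)" by (cases "t \<ge> 0") auto
    have "b * \<bar>t\<bar> - c * (exp t + exp (- t)) \<le> b * \<bar>t\<bar> - c * exp \<bar>t\<bar>"
      using e assms by (simp add: mult_left_mono)
    also have "\<dots> \<le> B - t^2/2" using B[of "\<bar>t\<bar>"] by (simp add: power2_abs)
    finally have "D1 b c t \<le> exp (B - t^2/2)" unfolding D1_def by simp
    also have "\<dots> = exp B * exp (-(t^2)/2)" by (subst exp_add[symmetric]) simp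
    finally show "D1 b c t \<le> exp B * exp (-(t^2)/2)" .
  qed
qed

lemma D1_pos: "D1 b c t > 0" by (simp add: D1_def)

lemma D1_meas[measurable]: "D1 b c \<in> borel_measurable borel"
  unfolding D1_def by measurable

lemma D1_int:
  assumes "c > 0" shows "integrable lborel (D1 b c)"
proof -
  obtain K where K: "\<And>t. D1 b c t \<le> K * exp (-(t^2)/2)" using D1_bound[OF assms] by blast
  have "integrable lborel (\<lambda>t. K * (sqrt (2*pi) * normal_density 0 1 t))"
    by (intro integrable_mult_right integrable_normal_density) auto
  moreover have "(\<lambda>t. K * (sqrt (2*pi) * normal_density 0 1 t)) = (\<lambda>t. K * exp (-(t^2)/2))"
    by (rule ext) (simp add: normal_density_def)
  ultimately have i: "integrable lborel (\<lambda>t. K * exp (-(t^2)/2))"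
    by simp
  have K': "D1 b c t \<le> \<bar>K * exp (-(t^2/2))\<bar>" for t
    using K[of t] by (smt (verit) minus_divide_left)
  show ?thesis
    by (rule Bochner_Integration.integrable_bound[OF i])
       (auto intro!: AE_I2 simp: D1_pos less_imp_le K')
qed

lemma D1_lim:
  assumes "c > 0" shows "(D1 b c \<longlongrightarrow> 0) at_top" "(D1 b c \<longlongrightarrow> 0) at_bot"
proof -
  obtain K where K: "\<And>t. D1 b c t \<le> K * exp (-(t^2)/2)" using D1_bound[OF assms] by blast
  have l1: "((\<lambda>t. K * exp (-(t^2)/2)) \<longlongrightarrow> 0) at_top" using tendsto_mult_right_zero[OF asy2(1)] by simp
  have l2: "((\<lambda>t. K * exp (-(t^2)/2)) \<longlongrightarrow> 0) at_bot" using tendsto_mult_right_zero[OF asy2(2)] by simp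
  have e: "\<forall>\<^sub>F t in F. 0 \<le> D1 b c t" "\<forall>\<^sub>F t in F. D1 b c t \<le> K * exp (-(t^2)/2)" for F
    using K less_imp_le[OF D1_pos] by (auto intro!: always_eventually)
  show "(D1 b c \<longlongrightarrow> 0) at_top" by (rule tendsto_sandwich[OF e tendsto_const l1])
  show "(D1 b c \<longlongrightarrow> 0) at_bot" by (rule tendsto_sandwich[OF e tendsto_const l2])
qed

locale kern =
  fixes N :: nat and h :: real and v :: complex
  assumes N2: "N \<ge> 2" and hpos: "h > 0"
begin

abbreviation "MM \<equiv> PiM {1..<N} (\<lambda>_. lborel :: real measure)"

definition Sy :: "(nat \<Rightarrow> real) \<Rightarrow> real" where
  "Sy y = (\<Sum>i\<in>{1..<N}. \<bar>y i\<bar>)"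

lemma Sy_nonneg: "Sy y \<ge> 0" unfolding Sy_def by (auto intro: sum_nonneg)

definition EB :: "((nat \<Rightarrow> real) \<Rightarrow> complex) \<Rightarrow> bool" where
  "EB g \<longleftrightarrow> (\<exists>C a. \<forall>y. norm (g y) \<le> C * exp (a * Sy y))"

definition Nice :: "((nat \<Rightarrow> real) \<Rightarrow> complex) \<Rightarrow> bool" where
  "Nice g \<longleftrightarrow> continuous_on UNIV g \<and> EB g"

lemma Qker_norm:
  "norm (Qker h N v x y) = exp (- (Im v / h) * ((\<Sum>i=1..N. x i) - (\<Sum>i=1..<N. y i))
      - (1 / h) * (\<Sum>i=1..<N. exp (x i - y i) + exp (y i - x (Suc i))))"
  unfolding Qker_def norm_exp_eq_Re by (simp add: Re_divide_of_real)

lemma Qker_cont: "continuous_on UNIV (\<lambda>y. Qker h N v x y)"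
  unfolding Qker_def by (intro continuous_intros) auto

lemma Qbound:
  fixes K :: real
  assumes K: "\<And>j. j \<in> {1..N} \<Longrightarrow> \<bar>x j\<bar> \<le> K"
  shows "norm (Qker h N v x y) \<le> exp (\<bar>Im v\<bar> / h * (N * K)) * (\<Prod>i\<in>{1..<N}. D1 (\<bar>Im v\<bar> / h) (exp (-K) / h) (y i))"
proof -
  let ?b = "\<bar>Im v\<bar> / h" and ?c = "exp (-K) / h"
  have s1: "\<bar>\<Sum>i=1..N. x i\<bar> \<le> N * K"
  proof -
    have "\<bar>\<Sum>i=1..N. x i\<bar> \<le> (\<Sum>i=1..N. \<bar>x i\<bar>)" by (rule sum_abs)
    also have "\<dots> \<le> (\<Sum>i=1..N. K)" by (rule sum_mono) (use K in auto)
    finally show ?thesis by simp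
  qed
  have s2: "\<bar>\<Sum>i=1..<N. y i\<bar> \<le> (\<Sum>i=1..<N. \<bar>y i\<bar>)" by (rule sum_abs)
  have s3: "(\<Sum>i=1..<N. ?c * (exp (y i) + exp (- y i))) \<le> (1 / h) * (\<Sum>i=1..<N. exp (x i - y i) + exp (y i - x (Suc i)))"
  proof -
    have "(\<Sum>i=1..<N. ?c * (exp (y i) + exp (- y i))) = (1/h) * (\<Sum>i=1..<N. exp (-K) * exp (- y i) + exp (-K) * exp (y i))"
      by (simp add: sum_distrib_left algebra_simps)
    also have "\<dots> \<le> (1 / h) * (\<Sum>i=1..<N. exp (x i - y i) + exp (y i - x (Suc i)))"
    proof (intro mult_left_mono sum_mono add_mono)
      fix i assume i: "i \<in> {1..<N}"
      have "- K \<le> x i" using K[of i] i by auto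
      then show "exp (-K) * exp (- y i) \<le> exp (x i - y i)" by (simp add: exp_add[symmetric])
      have "x (Suc i) \<le> K" using K[of "Suc i"] i by auto
      then show "exp (-K) * exp (y i) \<le> exp (y i - x (Suc i))" by (simp add: exp_add[symmetric])
    qed (use hpos in auto)
    finally show ?thesis .
  qed
  have e1: "- (Im v / h) * ((\<Sum>i=1..N. x i) - (\<Sum>i=1..<N. y i)) \<le> ?b * (N * K) + ?b * (\<Sum>i=1..<N. \<bar>y i\<bar>)"
  proof -
    have "- (Im v / h) * ((\<Sum>i=1..N. x i) - (\<Sum>i=1..<N. y i)) \<le> ?b * \<bar>(\<Sum>i=1..N. x i) - (\<Sum>i=1..<N. y i)\<bar>"
    proof -
      have aux: "-(A/h) \<le> \<bar>A\<bar>/h" for A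
        using divide_right_mono[of "-A" "\<bar>A\<bar>" h] hpos by simp
      show ?thesis using hpos aux by (simp add: abs_mult[symmetric] abs_divide)
    qed
    also have "\<dots> \<le> ?b * (\<bar>\<Sum>i=1..N. x i\<bar> + \<bar>\<Sum>i=1..<N. y i\<bar>)"
      by (intro mult_left_mono abs_triangle_ineq4) (use hpos in auto)
    also have "\<dots> \<le> ?b * (N * K + (\<Sum>i=1..<N. \<bar>y i\<bar>))"
      by (intro mult_left_mono add_mono s1 s2) (use hpos in auto)
    finally show ?thesis by (simp add: algebra_simps)
  qed
  have "(\<Prod>i\<in>{1..<N}. D1 ?b ?c (y i)) = exp (\<Sum>i\<in>{1..<N}. ?b * \<bar>y i\<bar> - ?c * (exp (y i) + exp (- y i)))"
    unfolding D1_def by (simp add: exp_sum)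
  also have "\<dots> = exp (?b * (\<Sum>i=1..<N. \<bar>y i\<bar>) - (\<Sum>i=1..<N. ?c * (exp (y i) + exp (- y i))))"
    by (simp add: sum_subtractf sum_distrib_left)
  finally have P: "(\<Prod>i\<in>{1..<N}. D1 ?b ?c (y i)) = \<dots>" .
  show ?thesis
    unfolding Qker_norm P exp_add[symmetric] using e1 s3 by simp
qed

end

lemma psf_lborel: "product_sigma_finite (\<lambda>_::nat. lborel :: real measure)"
  by (simp add: product_sigma_finite_def lborel.sigma_finite_measure_axioms)

context kern begin

lemma int_prodD1:
  assumes "c > 0"
  shows "integrable MM (\<lambda>y. \<Prod>i\<in>{1..<N}. D1 b c (y i))"
  using product_sigma_finite.product_integrable_prod[OF psf_lborel, of "{1..<N}" "\<lambda>_. D1 b c"]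
    D1_int[OF assms] by simp

lemma int_dom:
  fixes g :: "(nat \<Rightarrow> real) \<Rightarrow> complex"
  assumes "g \<in> borel_measurable MM" "c > 0" "\<And>y. norm (g y) \<le> C * (\<Prod>i\<in>{1..<N}. D1 b c (y i))"
  shows "integrable MM g"
proof -
  have "integrable MM (\<lambda>y. C * (\<Prod>i\<in>{1..<N}. D1 b c (y i)))"
    by (intro integrable_mult_right int_prodD1 assms)
  then show ?thesis
    by (rule Bochner_Integration.integrable_bound) (use assms in \<open>auto intro!: AE_I2 intro: order_trans abs_ge_self\<close>)
qed

lemma exp_Sy_prod: "exp (a * Sy y) * (\<Prod>i\<in>{1..<N}. D1 b c (y i)) = (\<Prod>i\<in>{1..<N}. D1 (a + b) c (y i))"
proof -
  have "exp (a * Sy y) = (\<Prod>i\<in>{1..<N}. exp (a * \<bar>y i\<bar>))"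
    unfolding Sy_def by (simp add: sum_distrib_left exp_sum)
  then show ?thesis
    by (simp add: prod.distrib[symmetric] D1_def exp_add[symmetric] algebra_simps)
qed

lemma dom_QF:
  fixes K :: real
  assumes K: "\<And>j. j \<in> {1..N} \<Longrightarrow> \<bar>x j\<bar> \<le> K" and F: "norm (F y) \<le> C * exp (a * Sy y)"
  shows "norm (Qker h N v x y * F y) \<le> (C * exp (\<bar>Im v\<bar> / h * (N * K))) * (\<Prod>i\<in>{1..<N}. D1 (a + \<bar>Im v\<bar> / h) (exp (-K) / h) (y i))"
proof -
  have "norm (Qker h N v x y * F y) = norm (Qker h N v x y) * norm (F y)" by (simp add: norm_mult)
  also have "\<dots> \<le> (exp (\<bar>Im v\<bar> / h * (N * K)) * (\<Prod>i\<in>{1..<N}. D1 (\<bar>Im v\<bar> / h) (exp (-K) / h) (y i))) * (C * exp (a * Sy y))"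
    by (intro mult_mono Qbound K F mult_nonneg_nonneg prod_nonneg) (auto intro: less_imp_le D1_pos)
  also have "\<dots> = (C * exp (\<bar>Im v\<bar> / h * (N * K))) * (exp (a * Sy y) * (\<Prod>i\<in>{1..<N}. D1 (\<bar>Im v\<bar> / h) (exp (-K) / h) (y i)))"
    by (simp add: algebra_simps)
  finally show ?thesis unfolding exp_Sy_prod .
qed

lemma Kx: fixes x :: "nat \<Rightarrow> real" assumes "j \<in> {1..N}" shows "\<bar>x j\<bar> \<le> (\<Sum>i=1..N. \<bar>x i\<bar>)"
  by (rule member_le_sum[where f="\<lambda>i. \<bar>x i\<bar>"]) (use assms in auto)

lemma int_QF:
  assumes "F \<in> borel_measurable MM" "EB F"
  shows "integrable MM (\<lambda>y. Qker h N v x y * F y)"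
proof -
  obtain C a where F: "\<And>y. norm (F y) \<le> C * exp (a * Sy y)" using assms(2) unfolding EB_def by blast
  let ?K = "\<Sum>i=1..N. \<bar>x i\<bar>"
  have B: "norm (Qker h N v x y * F y) \<le> (C * exp (\<bar>Im v\<bar> / h * (N * ?K))) * (\<Prod>i\<in>{1..<N}. D1 (a + \<bar>Im v\<bar> / h) (exp (-?K) / h) (y i))" for y
    by (rule dom_QF[OF Kx F])
  show ?thesis
  proof (rule int_dom[OF _ _ B])
    show "(\<lambda>y. Qker h N v x y * F y) \<in> borel_measurable MM"
      using meas_cont[OF Qker_cont] assms(1) by measurable
  qed (use hpos in auto)
qed

end

context kern begin

lemma IBP0:
  fixes \<phi> \<psi> :: "(nat \<Rightarrow> real) \<Rightarrow> complex"
  assumes k: "k \<in> {1..<N}"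
    and int: "integrable MM \<psi>"
    and der: "\<And>y t. ((\<lambda>s. \<phi> (y(k:=s))) has_vector_derivative \<psi> (y(k:=t))) (at t)"
    and cont: "\<And>y. continuous_on UNIV (\<lambda>t. \<psi> (y(k:=t)))"
    and lint: "\<And>y. integrable lborel (\<lambda>t. \<psi> (y(k:=t)))"
    and top: "\<And>y. ((\<lambda>t. \<phi> (y(k:=t))) \<longlongrightarrow> 0) at_top"
    and bot: "\<And>y. ((\<lambda>t. \<phi> (y(k:=t))) \<longlongrightarrow> 0) at_bot"
  shows "integral\<^sup>L MM \<psi> = 0"
proof -
  have I: "{1..<N} = insert k ({1..<N} - {k})" using k by auto
  have int': "integrable (PiM (insert k ({1..<N} - {k})) (\<lambda>_. lborel)) \<psi>" using int I by simp
  have "integral\<^sup>L MM \<psi> = integral\<^sup>L (PiM (insert k ({1..<N} - {k})) (\<lambda>_. lborel)) \<psi>"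
    using I by simp
  also have "\<dots> = (\<integral>x. (\<integral>t. \<psi> (x(k:=t)) \<partial>lborel) \<partial>PiM ({1..<N} - {k}) (\<lambda>_. lborel))"
    by (rule product_sigma_finite.product_integral_insert[OF psf_lborel _ _ int']) auto
  also have "\<dots> = (\<integral>x. 0 \<partial>PiM ({1..<N} - {k}) (\<lambda>_. lborel))"
  proof -
    have "(\<integral>t. \<psi> (x(k:=t)) \<partial>lborel) = 0" for x :: "nat \<Rightarrow> real"
      by (rule FTC_line[where F="\<lambda>t. \<phi> (x(k:=t))"]) (use der cont lint top bot in auto)
    then show ?thesis by simp
  qed
  finally show ?thesis by simp
qed

end

lemma hvd_iff:
  fixes F :: "real \<Rightarrow> 'a::real_normed_field"
  shows "(F has_vector_derivative D) (at t0) \<longleftrightarrow> ((\<lambda>s. (F s - F t0) / of_real (s - t0)) \<longlongrightarrow> D) (at t0)"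
proof -
  have eq: "\<forall>\<^sub>F s in at t0. norm ((F s - F t0) - (s - t0) *\<^sub>R D) / norm (s - t0) = norm ((F s - F t0) / of_real (s - t0) - D)"
    unfolding eventually_at_filter
  proof (intro always_eventually allI impI)
    fix s assume "s \<noteq> t0"
    then have ne: "(of_real (s - t0) :: 'a) \<noteq> 0" by simp
    have "norm ((F s - F t0) / of_real (s - t0) - D) = norm (((F s - F t0) - of_real (s - t0) * D) / of_real (s - t0))"
      using ne by (simp add: field_simps)
    also have "\<dots> = norm ((F s - F t0) - (s - t0) *\<^sub>R D) / norm (s - t0)"
      by (simp only: norm_divide scaleR_conv_of_real norm_of_real real_norm_def)
    finally show "norm ((F s - F t0) - (s - t0) *\<^sub>R D) / norm (s - t0) = norm ((F s - F t0) / of_real (s - t0) - D)" by (rule sym)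
  qed
  have "(F has_vector_derivative D) (at t0) \<longleftrightarrow> ((\<lambda>s. norm ((F s - F t0) - (s - t0) *\<^sub>R D) / norm (s - t0)) \<longlongrightarrow> 0) (at t0)"
    unfolding has_vector_derivative_def has_derivative_iff_norm by (simp add: bounded_linear_scaleR_left)
  also have "\<dots> \<longleftrightarrow> ((\<lambda>s. norm ((F s - F t0) / of_real (s - t0) - D)) \<longlongrightarrow> 0) (at t0)"
    by (rule tendsto_cong[OF eq])
  also have "\<dots> \<longleftrightarrow> ((\<lambda>s. (F s - F t0) / of_real (s - t0)) \<longlongrightarrow> D) (at t0)"
    by (simp add: tendsto_norm_zero_iff LIM_zero_iff)
  finally show ?thesis .
qed

lemma deriv_integral:
  fixes H H' :: "real \<Rightarrow> 'a \<Rightarrow> complex" and D :: "'a \<Rightarrow> real"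
  assumes meas: "\<And>t. H t \<in> borel_measurable M" and meas': "H' t0 \<in> borel_measurable M"
    and intH: "\<And>t. integrable M (H t)" and D: "integrable M D"
    and der: "\<And>t y. y \<in> space M \<Longrightarrow> ((\<lambda>s. H s y) has_vector_derivative H' t y) (at t)"
    and bnd: "\<And>t y. y \<in> space M \<Longrightarrow> dist t t0 < 1 \<Longrightarrow> norm (H' t y) \<le> D y"
  shows "((\<lambda>t. \<integral>y. H t y \<partial>M) has_vector_derivative (\<integral>y. H' t0 y \<partial>M)) (at t0)"
proof -
  have mvt: "norm (H s y - H t0 y) \<le> D y * \<bar>s - t0\<bar>" if y: "y \<in> space M" and s: "dist s t0 < 1" for s y
  proof -
    have "norm (H s y - H t0 y) \<le> D y * norm (s - t0)"
    proof (rule differentiable_bound[where S="ball t0 1" and f="\<lambda>s. H s y" and f'="\<lambda>s h. h *\<^sub>R H' s y"])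
      show "convex (ball t0 1)" by simp
      fix x assume x: "x \<in> ball t0 1"
      show "((\<lambda>s. H s y) has_derivative (\<lambda>h. h *\<^sub>R H' x y)) (at x within ball t0 1)"
        using has_vector_derivative_at_within[OF der[OF y, of x]] by (simp add: has_vector_derivative_def)
      have "onorm (\<lambda>h. h *\<^sub>R H' x y) = onorm (\<lambda>h::real. h) * norm (H' x y)"
        using onorm_scaleR_left[of "\<lambda>h::real. h" "H' x y"] by simp
      also have "\<dots> = norm (H' x y)" by (simp add: onorm_id)
      also have "\<dots> \<le> D y" using bnd[OF y, of x] x by (simp add: dist_commute)
      finally show "onorm (\<lambda>h. h *\<^sub>R H' x y) \<le> D y" .
    qed (use s in \<open>auto simp: dist_commute\<close>)
    then show ?thesis by simp
  qed
  show ?thesis unfolding hvd_iff tendsto_at_iff_sequentially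
  proof (intro allI impI)
    fix X :: "nat \<Rightarrow> real" assume X: "\<forall>i. X i \<in> UNIV - {t0}" "X \<longlonglongrightarrow> t0"
    have "eventually (\<lambda>n. dist (X n) t0 < 1) sequentially" using tendstoD[OF X(2), of 1] by simp
    then obtain n0 where n0: "\<And>n. n \<ge> n0 \<Longrightarrow> dist (X n) t0 < 1" by (auto simp: eventually_sequentially)
    define s where "s n y = (H (X (n + n0)) y - H t0 y) / of_real (X (n + n0) - t0)" for n y
    have conv: "(\<lambda>n. \<integral>y. s n y \<partial>M) \<longlonglongrightarrow> (\<integral>y. H' t0 y \<partial>M)"
    proof (rule integral_dominated_convergence[where w=D])
      show "H' t0 \<in> borel_measurable M" by fact
      show "\<And>n. s n \<in> borel_measurable M" unfolding s_def using meas by measurable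
      show "integrable M D" by fact
      show "AE y in M. (\<lambda>n. s n y) \<longlonglongrightarrow> H' t0 y"
      proof (rule AE_I2)
        fix y assume y: "y \<in> space M"
        have q: "((\<lambda>r. (H r y - H t0 y) / of_real (r - t0)) \<longlongrightarrow> H' t0 y) (at t0)"
          using der[OF y, of t0] unfolding hvd_iff .
        have Xo: "filterlim (\<lambda>n. X (n + n0)) (at t0) sequentially"
          unfolding filterlim_at using X
          by (auto intro!: always_eventually LIMSEQ_ignore_initial_segment)
        show "(\<lambda>n. s n y) \<longlonglongrightarrow> H' t0 y"
          unfolding s_def by (rule filterlim_compose[OF q Xo])
      qed
      show "AE y in M. norm (s n y) \<le> D y" for n
      proof (rule AE_I2)
        fix y assume y: "y \<in> space M"
        have ne: "X (n + n0) - t0 \<noteq> 0" using X(1) by auto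
        have "norm (s n y) = norm (H (X (n + n0)) y - H t0 y) / \<bar>X (n + n0) - t0\<bar>"
          unfolding s_def by (simp only: norm_divide norm_of_real)
        also have "\<dots> \<le> D y * \<bar>X (n + n0) - t0\<bar> / \<bar>X (n + n0) - t0\<bar>"
          by (intro divide_right_mono mvt y n0) auto
        also have "\<dots> = D y" using ne by simp
        finally show "norm (s n y) \<le> D y" .
      qed
    qed
    have e: "(\<integral>y. s n y \<partial>M) = ((\<integral>y. H (X (n + n0)) y \<partial>M) - (\<integral>y. H t0 y \<partial>M)) / of_real (X (n + n0) - t0)" for n
      unfolding s_def by (simp only: integral_divide_zero Bochner_Integration.integral_diff[OF intH intH])
    have "(\<lambda>n. ((\<lambda>s. ((\<lambda>t. \<integral>y. H t y \<partial>M) s - (\<lambda>t. \<integral>y. H t y \<partial>M) t0) / of_real (s - t0)) \<circ> X) (n + n0)) \<longlonglongrightarrow> (\<integral>y. H' t0 y \<partial>M)"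
      using conv unfolding e comp_def .
    then show "((\<lambda>s. ((\<lambda>t. \<integral>y. H t y \<partial>M) s - (\<lambda>t. \<integral>y. H t y \<partial>M) t0) / of_real (s - t0)) \<circ> X) \<longlonglongrightarrow> (\<integral>y. H' t0 y \<partial>M)"
      by (rule LIMSEQ_offset)
  qed
qed

lemma sum_delta_Suc:
  fixes g :: "nat \<Rightarrow> 'a::comm_monoid_add"
  shows "(\<Sum>i\<in>{1..<N}. if Suc i = k then g i else 0) = (if 2 \<le> k \<and> k \<le> N then g (k - 1) else 0)"
proof (cases "2 \<le> k \<and> k \<le> N")
  case True
  have "(\<Sum>i\<in>{1..<N}. if Suc i = k then g i else 0) = (\<Sum>i\<in>{1..<N}. if i = k - 1 then g i else 0)"
    by (rule sum.cong) (use True in auto)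
  also have "\<dots> = g (k - 1)"
  proof -
    have "k - 1 \<in> {1..<N}" using True by auto
    then show ?thesis by (simp add: sum.delta')
  qed
  finally show ?thesis using True by simp
next
  case False
  then have "(\<Sum>i\<in>{1..<N}. if Suc i = k then g i else 0) = (\<Sum>i\<in>{1..<N}. 0)"
    by (intro sum.cong) auto
  moreover have "(if 2 \<le> k \<and> k \<le> N then g (k - 1) else 0) = 0" by (rule if_not_P[OF False])
  ultimately show ?thesis by auto
qed

lemma d_upd: "((\<lambda>s. (x(k:=s)) i) has_real_derivative (if i = k then 1 else 0)) (at t)"
  by (cases "i = k") auto

context kern begin

definition dZx :: "nat \<Rightarrow> (nat \<Rightarrow> real) \<Rightarrow> (nat \<Rightarrow> real) \<Rightarrow> complex" where
  "dZx k x y = \<i> * v / of_real h - of_real ((1/h) * ((if k < N then exp (x k - y k) else 0) - (if 2 \<le> k then exp (y (k-1) - x k) else 0)))"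

definition dZy :: "nat \<Rightarrow> (nat \<Rightarrow> real) \<Rightarrow> (nat \<Rightarrow> real) \<Rightarrow> complex" where
  "dZy k x y = - (\<i> * v / of_real h) - of_real ((1/h) * (exp (y k - x (Suc k)) - exp (x k - y k)))"

lemma exp_chain:
  fixes Z :: "real \<Rightarrow> complex"
  assumes "(Z has_vector_derivative Z') (at t)"
  shows "((\<lambda>s. exp (Z s)) has_vector_derivative (Z' * exp (Z t))) (at t)"
  using field_vector_diff_chain_at[OF assms DERIV_exp] by (simp add: comp_def)

lemma dQx:
  assumes k: "k \<in> {1..N}"
  shows "((\<lambda>s. Qker h N v (x(k:=s)) y) has_vector_derivative (dZx k (x(k:=t)) y * Qker h N v (x(k:=t)) y)) (at t)"
proof -
  define S1 where "S1 s = (\<Sum>i=1..N. (x(k:=s)) i) - (\<Sum>i=1..<N. y i)" for s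
  define S2 where "S2 s = (1/h) * (\<Sum>i=1..<N. exp ((x(k:=s)) i - y i) + exp (y i - (x(k:=s)) (Suc i)))" for s
  have Q: "Qker h N v (x(k:=s)) y = exp ((\<i> * v / of_real h) * of_real (S1 s) - of_real (S2 s))" for s
    unfolding Qker_def S1_def S2_def ..
  have dS1: "(S1 has_real_derivative 1) (at t)"
  proof -
    have "(S1 has_real_derivative (\<Sum>i=1..N. (if i = k then 1 else 0)) - 0) (at t)"
      unfolding S1_def by (intro DERIV_diff DERIV_sum d_upd DERIV_const)
    then show ?thesis using k by (simp add: sum.delta')
  qed
  have dS2: "(S2 has_real_derivative (1/h) * ((if k < N then exp (t - y k) else 0) - (if 2 \<le> k then exp (y (k-1) - t) else 0))) (at t)"
  proof -
    have "(S2 has_real_derivative (1/h) * (\<Sum>i=1..<N. exp ((x(k:=t)) i - y i) * ((if i = k then 1 else 0) - 0)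
            + exp (y i - (x(k:=t)) (Suc i)) * (0 - (if Suc i = k then 1 else 0)))) (at t)"
      unfolding S2_def by (intro DERIV_cmult DERIV_sum DERIV_add DERIV_fun_exp DERIV_diff d_upd DERIV_const) 
    moreover have "(\<Sum>i=1..<N. exp ((x(k:=t)) i - y i) * ((if i = k then 1 else 0) - 0)
            + exp (y i - (x(k:=t)) (Suc i)) * (0 - (if Suc i = k then 1 else 0)))
       = (\<Sum>i=1..<N. (if i = k then exp (t - y i) else 0)) - (\<Sum>i=1..<N. (if Suc i = k then exp (y i - t) else 0))"
      unfolding sum_subtractf[symmetric] by (rule sum.cong[OF refl]) (auto simp: fun_upd_def)
    moreover have "(\<Sum>i=1..<N. (if i = k then exp (t - y i) else 0)) = (if k < N then exp (t - y k) else 0)"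
      using k by (simp add: sum.delta')
    moreover have "(\<Sum>i=1..<N. (if Suc i = k then exp (y i - t) else 0)) = (if 2 \<le> k then exp (y (k-1) - t) else 0)"
      by (subst sum_delta_Suc) (use k in auto)
    ultimately show ?thesis by simp
  qed
  have dZ: "((\<lambda>s. (\<i> * v / of_real h) * of_real (S1 s) - of_real (S2 s)) has_vector_derivative
      ((\<i> * v / of_real h) * of_real 1 - of_real ((1/h) * ((if k < N then exp (t - y k) else 0) - (if 2 \<le> k then exp (y (k-1) - t) else 0))))) (at t)"
    by (intro has_vector_derivative_diff has_vector_derivative_mult_right has_vector_derivative_of_real dS1 dS2)
  have "dZx k (x(k:=t)) y = (\<i> * v / of_real h) * of_real 1 - of_real ((1/h) * ((if k < N then exp (t - y k) else 0) - (if 2 \<le> k then exp (y (k-1) - t) else 0)))"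
    unfolding dZx_def using k by auto
  then show ?thesis unfolding Q using exp_chain[OF dZ] by simp
qed

lemma dQy:
  assumes k: "k \<in> {1..<N}"
  shows "((\<lambda>s. Qker h N v x (y(k:=s))) has_vector_derivative (dZy k x (y(k:=t)) * Qker h N v x (y(k:=t)))) (at t)"
proof -
  define S1 where "S1 s = (\<Sum>i=1..N. x i) - (\<Sum>i=1..<N. (y(k:=s)) i)" for s
  define S2 where "S2 s = (1/h) * (\<Sum>i=1..<N. exp (x i - (y(k:=s)) i) + exp ((y(k:=s)) i - x (Suc i)))" for s
  have Q: "Qker h N v x (y(k:=s)) = exp ((\<i> * v / of_real h) * of_real (S1 s) - of_real (S2 s))" for s
    unfolding Qker_def S1_def S2_def ..
  have dS1: "(S1 has_real_derivative -1) (at t)"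
  proof -
    have "(S1 has_real_derivative 0 - (\<Sum>i=1..<N. (if i = k then 1 else 0))) (at t)"
      unfolding S1_def by (intro DERIV_diff DERIV_sum d_upd DERIV_const)
    then show ?thesis using k by (simp add: sum.delta')
  qed
  have dS2: "(S2 has_real_derivative (1/h) * (exp (t - x (Suc k)) - exp (x k - t))) (at t)"
  proof -
    have "(S2 has_real_derivative (1/h) * (\<Sum>i=1..<N. exp (x i - (y(k:=t)) i) * (0 - (if i = k then 1 else 0))
            + exp ((y(k:=t)) i - x (Suc i)) * ((if i = k then 1 else 0) - 0))) (at t)"
      unfolding S2_def by (intro DERIV_cmult DERIV_sum DERIV_add DERIV_fun_exp DERIV_diff d_upd DERIV_const)
    moreover have "(\<Sum>i=1..<N. exp (x i - (y(k:=t)) i) * (0 - (if i = k then 1 else 0))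
            + exp ((y(k:=t)) i - x (Suc i)) * ((if i = k then 1 else 0) - 0))
       = (\<Sum>i=1..<N. (if i = k then exp (t - x (Suc i)) else 0)) - (\<Sum>i=1..<N. (if i = k then exp (x i - t) else 0))"
      unfolding sum_subtractf[symmetric] by (rule sum.cong[OF refl]) (auto simp: fun_upd_def)
    moreover have "(\<Sum>i=1..<N. (if i = k then exp (t - x (Suc i)) else 0)) = exp (t - x (Suc k))"
      using k by (simp add: sum.delta')
    moreover have "(\<Sum>i=1..<N. (if i = k then exp (x i - t) else 0)) = exp (x k - t)"
      using k by (simp add: sum.delta')
    ultimately show ?thesis by simp
  qed
  have dZ: "((\<lambda>s. (\<i> * v / of_real h) * of_real (S1 s) - of_real (S2 s)) has_vector_derivative
      ((\<i> * v / of_real h) * of_real (-1) - of_real ((1/h) * (exp (t - x (Suc k)) - exp (x k - t))))) (at t)"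
    by (intro has_vector_derivative_diff has_vector_derivative_mult_right has_vector_derivative_of_real dS1 dS2)
  have "dZy k x (y(k:=t)) = (\<i> * v / of_real h) * of_real (-1) - of_real ((1/h) * (exp (t - x (Suc k)) - exp (x k - t)))"
    unfolding dZy_def by simp
  then show ?thesis unfolding Q using exp_chain[OF dZ] by simp
qed

end

context kern begin

lemma EB_C_nonneg: "norm (g y) \<le> C * exp (a * Sy y) \<Longrightarrow> C \<ge> 0"
  by (metis exp_gt_zero norm_ge_zero order_trans zero_le_mult_iff not_le less_imp_le)

lemma EB_mono_exp: "C \<ge> 0 \<Longrightarrow> a \<le> a' \<Longrightarrow> C * exp (a * Sy y) \<le> C * exp (a' * Sy y)"
  using Sy_nonneg[of y] by (intro mult_left_mono) (auto intro: mult_right_mono)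

lemma EB_add: assumes "EB g1" "EB g2" shows "EB (\<lambda>y. g1 y + g2 y)"
proof -
  obtain C1 a1 where 1: "\<And>y. norm (g1 y) \<le> C1 * exp (a1 * Sy y)" using assms(1) unfolding EB_def by blast
  obtain C2 a2 where 2: "\<And>y. norm (g2 y) \<le> C2 * exp (a2 * Sy y)" using assms(2) unfolding EB_def by blast
  have c: "C1 \<ge> 0" "C2 \<ge> 0" using EB_C_nonneg 1 2 by blast+
  show ?thesis unfolding EB_def
  proof (intro exI allI)
    fix y
    have "norm (g1 y + g2 y) \<le> C1 * exp (a1 * Sy y) + C2 * exp (a2 * Sy y)"
      using norm_triangle_ineq[of "g1 y" "g2 y"] 1[of y] 2[of y] by simp
    also have "\<dots> \<le> C1 * exp (max a1 a2 * Sy y) + C2 * exp (max a1 a2 * Sy y)"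
      by (intro add_mono EB_mono_exp c) auto
    finally show "norm (g1 y + g2 y) \<le> (C1 + C2) * exp (max a1 a2 * Sy y)" by (simp add: algebra_simps)
  qed
qed

lemma EB_mult: assumes "EB g1" "EB g2" shows "EB (\<lambda>y. g1 y * g2 y)"
proof -
  obtain C1 a1 where 1: "\<And>y. norm (g1 y) \<le> C1 * exp (a1 * Sy y)" using assms(1) unfolding EB_def by blast
  obtain C2 a2 where 2: "\<And>y. norm (g2 y) \<le> C2 * exp (a2 * Sy y)" using assms(2) unfolding EB_def by blast
  have c: "C1 \<ge> 0" "C2 \<ge> 0" using EB_C_nonneg 1 2 by blast+
  show ?thesis unfolding EB_def
  proof (intro exI allI)
    fix y
    have "norm (g1 y * g2 y) \<le> (C1 * exp (a1 * Sy y)) * (C2 * exp (a2 * Sy y))"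
      unfolding norm_mult by (intro mult_mono 1 2) (use c in auto)
    also have "\<dots> = (C1 * C2) * exp ((a1 + a2) * Sy y)" by (simp add: algebra_simps exp_add)
    finally show "norm (g1 y * g2 y) \<le> (C1 * C2) * exp ((a1 + a2) * Sy y)" .
  qed
qed

lemma EB_const: "EB (\<lambda>y. c)"
  unfolding EB_def by (intro exI[of _ "norm c"] exI[of _ 0]) simp

lemma EB_neg: "EB g \<Longrightarrow> EB (\<lambda>y. - g y)"
  unfolding EB_def by simp

lemma EB_diff: "EB g1 \<Longrightarrow> EB g2 \<Longrightarrow> EB (\<lambda>y. g1 y - g2 y)"
  using EB_add[of g1 "\<lambda>y. - g2 y"] EB_neg[of g2] by simp

lemma EB_exp: assumes "\<And>y. \<bar>r y\<bar> \<le> B + a * Sy y" shows "EB (\<lambda>y. of_real (exp (r y)))"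
  unfolding EB_def
proof (intro exI allI)
  fix y
  have "exp (r y) \<le> exp (B + a * Sy y)" using assms[of y] by simp
  then show "norm (of_real (exp (r y)) :: complex) \<le> exp B * exp (a * Sy y)" by (simp add: exp_add)
qed

lemma abs_le_Sy: "i \<in> {1..<N} \<Longrightarrow> \<bar>y i\<bar> \<le> Sy y"
  unfolding Sy_def by (rule member_le_sum[where f="\<lambda>i. \<bar>y i\<bar>"]) auto

lemma Nice_add: "Nice g1 \<Longrightarrow> Nice g2 \<Longrightarrow> Nice (\<lambda>y. g1 y + g2 y)"
  unfolding Nice_def by (auto intro: EB_add continuous_intros)
lemma Nice_diff: "Nice g1 \<Longrightarrow> Nice g2 \<Longrightarrow> Nice (\<lambda>y. g1 y - g2 y)"
  unfolding Nice_def by (auto intro: EB_diff continuous_intros)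
lemma Nice_mult: "Nice g1 \<Longrightarrow> Nice g2 \<Longrightarrow> Nice (\<lambda>y. g1 y * g2 y)"
  unfolding Nice_def by (auto intro: EB_mult continuous_intros)
lemma Nice_const: "Nice (\<lambda>y. c)"
  unfolding Nice_def by (auto intro: EB_const)

lemma Nice_exp_xy: assumes "i \<in> {1..<N}" shows "Nice (\<lambda>y. of_real (exp (c - y i)))" "Nice (\<lambda>y. of_real (exp (y i - c)))"
proof -
  have b1: "\<bar>c - y i\<bar> \<le> \<bar>c\<bar> + 1 * Sy y" "\<bar>y i - c\<bar> \<le> \<bar>c\<bar> + 1 * Sy y" for y
    using abs_le_Sy[OF assms, of y] by linarith+
  show "Nice (\<lambda>y. of_real (exp (c - y i)))" unfolding Nice_def
    by (intro conjI continuous_intros EB_exp[where B="\<bar>c\<bar>" and a=1] b1) auto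
  show "Nice (\<lambda>y. of_real (exp (y i - c)))" unfolding Nice_def
    by (intro conjI continuous_intros EB_exp[where B="\<bar>c\<bar>" and a=1] b1) auto
qed

lemma Nice_exp_yy: assumes "i \<in> {1..<N}" "j \<in> {1..<N}" shows "Nice (\<lambda>y. of_real (exp (y i - y j)))"
proof -
  have b1: "\<bar>y i - y j\<bar> \<le> 0 + 2 * Sy y" for y
    using abs_le_Sy[OF assms(1), of y] abs_le_Sy[OF assms(2), of y] by linarith
  show ?thesis unfolding Nice_def
    by (intro conjI continuous_intros EB_exp[where B=0 and a=2] b1) auto
qed

lemma Nice_meas: "Nice g \<Longrightarrow> g \<in> borel_measurable MM"
  unfolding Nice_def by (auto intro: meas_cont)

lemma int_QN: "Nice g \<Longrightarrow> integrable MM (\<lambda>y. Qker h N v x y * g y)"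
  by (intro int_QF Nice_meas) (auto simp: Nice_def)

lemma integral_QN_add:
  "Nice g1 \<Longrightarrow> Nice g2 \<Longrightarrow> (\<integral>y. Qker h N v x y * (g1 y + g2 y) \<partial>MM) = (\<integral>y. Qker h N v x y * g1 y \<partial>MM) + (\<integral>y. Qker h N v x y * g2 y \<partial>MM)"
  unfolding distrib_left by (rule Bochner_Integration.integral_add[OF int_QN int_QN])

lemma integral_QN_diff:
  "Nice g1 \<Longrightarrow> Nice g2 \<Longrightarrow> (\<integral>y. Qker h N v x y * (g1 y - g2 y) \<partial>MM) = (\<integral>y. Qker h N v x y * g1 y \<partial>MM) - (\<integral>y. Qker h N v x y * g2 y \<partial>MM)"
  unfolding right_diff_distrib by (rule Bochner_Integration.integral_diff[OF int_QN int_QN])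

lemma integral_QN_cmult:
  "(\<integral>y. Qker h N v x y * (c * g y) \<partial>MM) = c * (\<integral>y. Qker h N v x y * g y \<partial>MM)"
proof -
  have "(\<integral>y. Qker h N v x y * (c * g y) \<partial>MM) = (\<integral>y. c * (Qker h N v x y * g y) \<partial>MM)"
    by (simp add: ac_simps)
  also have "\<dots> = c * (\<integral>y. Qker h N v x y * g y \<partial>MM)" by simp
  finally show ?thesis .
qed

end

lemma induct012: "P 0 \<Longrightarrow> P (Suc 0) \<Longrightarrow> (\<And>n. P n \<Longrightarrow> P (Suc n) \<Longrightarrow> P (Suc (Suc n))) \<Longrightarrow> P n"
  by (induction n rule: less_induct) (metis less_Suc_eq not0_implies_Suc)

locale toda = kern +
  fixes f :: "(nat \<Rightarrow> real) \<Rightarrow> complex" and u :: complex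
  assumes diff: "\<And>ks k y. set ks \<subseteq> {1..<N} \<Longrightarrow> length ks < N - 1 \<Longrightarrow> k \<in> {1..<N} \<Longrightarrow>
                 (\<lambda>t. pds ks f (y(k := t))) differentiable (at (y k))"
    and cont: "\<And>ks. set ks \<subseteq> {1..<N} \<Longrightarrow> length ks \<le> N - 1 \<Longrightarrow> continuous_on UNIV (pds ks f)"
    and growth: "\<And>ks. set ks \<subseteq> {1..<N} \<Longrightarrow> length ks \<le> N - 1 \<Longrightarrow>
                 \<exists>C a. \<forall>y. norm (pds ks f y) \<le> C * exp (a * (\<Sum>i=1..<N. \<bar>y i\<bar>))"
begin

definition Cf :: "nat \<Rightarrow> ((nat \<Rightarrow> real) \<Rightarrow> complex) \<Rightarrow> bool" where
  "Cf n c \<longleftrightarrow> Nice c \<and> (\<forall>y j t. n < j \<longrightarrow> c (y(j:=t)) = c y)"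

lemma Cf_mono: "Cf n c \<Longrightarrow> Cf (Suc n) c" unfolding Cf_def by auto

lemma Cf_const: "Cf n (\<lambda>y. c)" unfolding Cf_def by (auto intro: Nice_const)

inductive Gd :: "nat \<Rightarrow> ((nat \<Rightarrow> real) \<Rightarrow> complex) \<Rightarrow> bool" where
  base: "set ks \<subseteq> {1..n} \<Longrightarrow> length ks \<le> n \<Longrightarrow> Gd n (pds ks f)"
| scal: "Gd n g \<Longrightarrow> Cf n c \<Longrightarrow> Gd n (\<lambda>y. c y * g y)"
| add: "Gd n g1 \<Longrightarrow> Gd n g2 \<Longrightarrow> Gd n (\<lambda>y. g1 y + g2 y)"

lemma Gd_mono: "Gd n g \<Longrightarrow> Gd (Suc n) g"
proof (induction rule: Gd.induct)
  case (base ks n)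
  then show ?case by (intro Gd.base) auto
next
  case (scal n g c)
  then show ?case by (intro Gd.scal Cf_mono)
next
  case (add n g1 g2)
  then show ?case by (intro Gd.add)
qed

lemma Gd_nice: "Gd n g \<Longrightarrow> n \<le> N - 1 \<Longrightarrow> Nice g"
proof (induction rule: Gd.induct)
  case (base ks n)
  have s: "set ks \<subseteq> {1..<N}" by (rule subset_trans[OF base(1)]) (use base N2 in auto)
  have ks: "set ks \<subseteq> {1..<N}" "length ks \<le> N - 1" using s base N2 by auto
  show ?case unfolding Nice_def EB_def Sy_def using cont[OF ks] growth[OF ks] by auto
next
  case (scal n g c)
  then show ?case by (intro Nice_mult) (auto simp: Cf_def)
next
  case (add n g1 g2)
  then show ?case by (intro Nice_add) auto
qed

lemma Gd_deriv:
  "Gd n g \<Longrightarrow> Suc n \<le> N - 1 \<Longrightarrow>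
    (\<forall>y. ((\<lambda>t. g (y(Suc n:=t))) has_vector_derivative pd (Suc n) g y) (at (y (Suc n)))) \<and> Gd (Suc n) (pd (Suc n) g)"
proof (induction rule: Gd.induct)
  case (base ks n)
  have s: "set ks \<subseteq> {1..<N}" by (rule subset_trans[OF base(1)]) (use base in auto)
  have ks: "set ks \<subseteq> {1..<N}" "length ks < N - 1" "Suc n \<in> {1..<N}" using s base by auto
  have "\<forall>y. ((\<lambda>t. pds ks f (y(Suc n:=t))) has_vector_derivative pd (Suc n) (pds ks f) y) (at (y (Suc n)))"
  proof
    fix y
    have "(\<lambda>t. pds ks f (y(Suc n := t))) differentiable (at (y (Suc n)))" by (rule diff[OF ks])
    then show "((\<lambda>t. pds ks f (y(Suc n:=t))) has_vector_derivative pd (Suc n) (pds ks f) y) (at (y (Suc n)))"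
      unfolding pd_def vector_derivative_works .
  qed
  moreover have "Gd (Suc n) (pds (Suc n # ks) f)" by (rule Gd.base) (use base in auto)
  then have "Gd (Suc n) (pd (Suc n) (pds ks f))" by (simp only: pds.simps)
  ultimately show ?case by blast
next
  case (scal n g c)
  then have IH: "\<And>y. ((\<lambda>t. g (y(Suc n:=t))) has_vector_derivative pd (Suc n) g y) (at (y (Suc n)))"
    and G: "Gd (Suc n) (pd (Suc n) g)" by blast+
  have cind: "c (y(Suc n:=t)) = c y" for y t using scal(2) unfolding Cf_def by auto
  have D: "((\<lambda>t. c (y(Suc n:=t)) * g (y(Suc n:=t))) has_vector_derivative c y * pd (Suc n) g y) (at (y (Suc n)))" for y
    unfolding cind by (intro has_vector_derivative_mult_right IH)
  have pdeq: "pd (Suc n) (\<lambda>y. c y * g y) = (\<lambda>y. c y * pd (Suc n) g y)"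
    by (rule ext) (simp add: pd_def vector_derivative_at[OF D])
  show ?case unfolding pdeq using D Gd.scal[OF G Cf_mono[OF scal(2)]] by blast
next
  case (add n g1 g2)
  then have IH1: "\<And>y. ((\<lambda>t. g1 (y(Suc n:=t))) has_vector_derivative pd (Suc n) g1 y) (at (y (Suc n)))"
    and IH2: "\<And>y. ((\<lambda>t. g2 (y(Suc n:=t))) has_vector_derivative pd (Suc n) g2 y) (at (y (Suc n)))"
    and G: "Gd (Suc n) (pd (Suc n) g1)" "Gd (Suc n) (pd (Suc n) g2)" by blast+
  have D: "((\<lambda>t. g1 (y(Suc n:=t)) + g2 (y(Suc n:=t))) has_vector_derivative pd (Suc n) g1 y + pd (Suc n) g2 y) (at (y (Suc n)))" for y
    by (intro has_vector_derivative_add IH1 IH2)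
  have pdeq: "pd (Suc n) (\<lambda>y. g1 y + g2 y) = (\<lambda>y. pd (Suc n) g1 y + pd (Suc n) g2 y)"
    by (rule ext) (simp add: pd_def vector_derivative_at[OF D])
  show ?case unfolding pdeq using D Gd.add[OF G] by blast
qed

lemma Aop_Gd: "n \<le> N - 1 \<Longrightarrow> Gd n (Aop h n u f)"
proof (induction n rule: induct012)
  case 1
  have "Gd 0 (pds [] f)" by (rule Gd.base) auto
  then show ?case by simp
next
  case 2
  have f0: "Gd 0 f" using Gd.base[of "[]" 0] by simp
  have f1: "Gd 1 f" using Gd_mono[OF f0] by simp
  have p1: "Gd 1 (pd 1 f)" using Gd_deriv[OF f0] 2 by simp
  have "Gd 1 (\<lambda>x. u * f x + \<i> * of_real h * pd 1 f x)"
    by (intro Gd.add Gd.scal[OF f1 Cf_const] Gd.scal[OF p1 Cf_const])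
  then show ?case by simp
next
  case (3 n)
  have A: "Gd (Suc n) (Aop h (Suc n) u f)" using 3 by auto
  have B: "Gd (Suc (Suc n)) (Aop h n u f)" using 3 by (auto intro: Gd_mono)
  have A2: "Gd (Suc (Suc n)) (Aop h (Suc n) u f)" using Gd_mono[OF A] .
  have pA: "Gd (Suc (Suc n)) (pd (Suc (Suc n)) (Aop h (Suc n) u f))" using Gd_deriv[OF A] 3(3) by auto
  have ce: "Cf (Suc (Suc n)) (\<lambda>x. - of_real (exp (x (Suc n) - x (Suc (Suc n)))))"
    unfolding Cf_def
  proof (intro conjI allI impI)
    have "Nice (\<lambda>x. (-1) * of_real (exp (x (Suc n) - x (Suc (Suc n)))))"
      by (intro Nice_mult Nice_const Nice_exp_yy) (use 3(3) in auto)
    then show "Nice (\<lambda>x. - of_real (exp (x (Suc n) - x (Suc (Suc n)))))" by simp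
  qed auto
  have "Gd (Suc (Suc n)) (\<lambda>x. (u * Aop h (Suc n) u f x + \<i> * of_real h * pd (Suc (Suc n)) (Aop h (Suc n) u f) x)
      + (- of_real (exp (x (Suc n) - x (Suc (Suc n))))) * Aop h n u f x)"
    by (intro Gd.add Gd.scal[OF A2 Cf_const] Gd.scal[OF pA Cf_const] Gd.scal[OF B ce])
  then show ?case by simp
qed

end

fun Pg :: "complex \<Rightarrow> (nat \<Rightarrow> complex) \<Rightarrow> (nat \<Rightarrow> complex) \<Rightarrow> nat \<Rightarrow> complex" where
  "Pg w a b 0 = 1"
| "Pg w a b (Suc 0) = w - a 1 + b 0"
| "Pg w a b (Suc (Suc n)) = (w - a (Suc (Suc n)) + b (Suc n)) * Pg w a b (Suc n) + a (Suc n) * b (Suc n) * Pg w a b n"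

fun Tg :: "complex \<Rightarrow> (nat \<Rightarrow> complex) \<Rightarrow> (nat \<Rightarrow> complex) \<Rightarrow> nat \<Rightarrow> complex" where
  "Tg w a b 0 = 1"
| "Tg w a b (Suc 0) = w - a 1 + b 1"
| "Tg w a b (Suc (Suc n)) = (w - a (Suc (Suc n)) + b (Suc (Suc n))) * Tg w a b (Suc n) + b (Suc n) * a (Suc (Suc n)) * Tg w a b n"

lemma PT_identity:
  assumes b0: "b 0 = 0"
  shows "Pg w a b (Suc n) = (w - a (Suc n)) * Tg w a b n + a (Suc n) * b n * (if n = 0 then 0 else Tg w a b (n - 1))"
proof (induction n rule: induct012)
  case 1 then show ?case using b0 by simp
next
  case 2 then show ?case using b0 by (simp add: algebra_simps)
next
  case (3 n)
  from 3 have e1: "Pg w a b (Suc n) = (w - a (Suc n)) * Tg w a b n + a (Suc n) * b n * (if n = 0 then 0 else Tg w a b (n - 1))"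
    and e2: "Pg w a b (Suc (Suc n)) = (w - a (Suc (Suc n))) * Tg w a b (Suc n) + a (Suc (Suc n)) * b (Suc n) * Tg w a b n"
    by simp_all
  have t1: "Tg w a b (Suc n) = (w - a (Suc n) + b (Suc n)) * Tg w a b n + b n * a (Suc n) * (if n = 0 then 0 else Tg w a b (n - 1))"
    using b0 by (cases n) auto
  have "Tg w a b (Suc n) - b (Suc n) * Tg w a b n = (w - a (Suc n)) * Tg w a b n + a (Suc n) * b n * (if n = 0 then 0 else Tg w a b (n - 1))"
    unfolding t1 by (simp add: algebra_simps)
  then have p1: "Pg w a b (Suc n) = Tg w a b (Suc n) - b (Suc n) * Tg w a b n"
    by (simp only: e1)
  have p2: "Pg w a b (Suc (Suc n)) = Tg w a b (Suc (Suc n)) - b (Suc (Suc n)) * Tg w a b (Suc n)"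
    using e2 by (simp add: algebra_simps)
  have "Pg w a b (Suc (Suc (Suc n))) = (w - a (Suc (Suc (Suc n))) + b (Suc (Suc n))) * Pg w a b (Suc (Suc n)) + a (Suc (Suc n)) * b (Suc (Suc n)) * Pg w a b (Suc n)"
    by (simp only: Pg.simps)
  also have "\<dots> = (w - a (Suc (Suc (Suc n))) + b (Suc (Suc n))) * (Tg w a b (Suc (Suc n)) - b (Suc (Suc n)) * Tg w a b (Suc n)) + a (Suc (Suc n)) * b (Suc (Suc n)) * (Tg w a b (Suc n) - b (Suc n) * Tg w a b n)"
    by (simp only: p1 p2)
  also have "\<dots> = (w - a (Suc (Suc (Suc n)))) * Tg w a b (Suc (Suc n)) + a (Suc (Suc (Suc n))) * b (Suc (Suc n)) * Tg w a b (Suc n)"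
    by (simp add: algebra_simps)
  finally show ?case by simp
qed

context kern begin

definition al :: "(nat \<Rightarrow> real) \<Rightarrow> (nat \<Rightarrow> real) \<Rightarrow> nat \<Rightarrow> complex" where
  "al x y k = (if 0 < k \<and> k < N then \<i> * of_real (exp (x k - y k)) else 0)"
definition be :: "(nat \<Rightarrow> real) \<Rightarrow> (nat \<Rightarrow> real) \<Rightarrow> nat \<Rightarrow> complex" where
  "be x y k = (if 0 < k \<and> k < N then \<i> * of_real (exp (y k - x (Suc k))) else 0)"

lemma Nice_al: "Nice (\<lambda>y. al x y k)"
proof (cases "0 < k \<and> k < N")
  case True
  then have "Nice (\<lambda>y. \<i> * of_real (exp (x k - y k)))" by (intro Nice_mult Nice_const Nice_exp_xy) auto
  then show ?thesis using True unfolding al_def by simp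
next
  case False
  then have "(\<lambda>y. al x y k) = (\<lambda>y. 0)" by (auto simp: al_def)
  then show ?thesis by (simp add: Nice_const)
qed

lemma Nice_be: "Nice (\<lambda>y. be x y k)"
proof (cases "0 < k \<and> k < N")
  case True
  then have "Nice (\<lambda>y. \<i> * of_real (exp (y k - x (Suc k))))" by (intro Nice_mult Nice_const Nice_exp_xy) auto
  then show ?thesis using True unfolding be_def by simp
next
  case False
  then have "(\<lambda>y. be x y k) = (\<lambda>y. 0)" by (auto simp: be_def)
  then show ?thesis by (simp add: Nice_const)
qed

lemma Nice_Tg: "Nice (\<lambda>y. Tg w (al x y) (be x y) n)"
  by (induction n rule: induct012) (auto intro!: Nice_add Nice_diff Nice_mult Nice_const Nice_al Nice_be)

lemma Nice_Pg: "Nice (\<lambda>y. Pg w (al x y) (be x y) n)"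
  by (induction n rule: induct012) (auto intro!: Nice_add Nice_diff Nice_mult Nice_const Nice_al Nice_be)

lemma Nice_dZy: assumes "k \<in> {1..<N}" shows "Nice (\<lambda>y. dZy k x y)"
proof -
  have "Nice (\<lambda>y. - (\<i> * v / of_real h) - of_real (1/h) * (of_real (exp (y k - x (Suc k))) - of_real (exp (x k - y k))))"
    by (intro Nice_diff Nice_mult Nice_const Nice_exp_xy assms)
  then show ?thesis unfolding dZy_def by simp
qed

lemma cont_line:
  fixes F :: "(nat \<Rightarrow> real) \<Rightarrow> 'b::topological_space" and y :: "nat \<Rightarrow> real"
  shows "continuous_on UNIV F \<Longrightarrow> continuous_on UNIV (\<lambda>t. F (y(k:=t)))"
proof -
  assume F: "continuous_on UNIV F"
  have "continuous_on UNIV (\<lambda>t::real. y(k:=t))"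
  proof (rule continuous_on_coordinatewise_then_product)
    fix i show "continuous_on UNIV (\<lambda>t. (y(k:=t)) i)" by (cases "i = k") auto
  qed
  then show ?thesis using continuous_on_compose2[OF F] by fastforce
qed

lemma line_bound:
  assumes g: "Nice g" and k: "k \<in> {1..<N}"
  shows "\<exists>C b c. c > 0 \<and> (\<forall>t. norm (Qker h N v x (y(k:=t)) * g (y(k:=t))) \<le> C * D1 b c t)"
proof -
  obtain C a where F: "\<And>y. norm (g y) \<le> C * exp (a * Sy y)" using g unfolding Nice_def EB_def by blast
  let ?K = "\<Sum>i=1..N. \<bar>x i\<bar>"
  let ?b = "a + \<bar>Im v\<bar> / h" and ?c = "exp (-?K) / h"
  let ?C = "(C * exp (\<bar>Im v\<bar> / h * (N * ?K))) * (\<Prod>i\<in>{1..<N} - {k}. D1 ?b ?c (y i))"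
  show ?thesis
  proof (intro exI conjI allI)
    show "?c > 0" using hpos by simp
    fix t
    have "norm (Qker h N v x (y(k:=t)) * g (y(k:=t))) \<le> (C * exp (\<bar>Im v\<bar> / h * (N * ?K))) * (\<Prod>i\<in>{1..<N}. D1 ?b ?c ((y(k:=t)) i))"
      by (rule dom_QF[OF Kx F])
    also have "(\<Prod>i\<in>{1..<N}. D1 ?b ?c ((y(k:=t)) i)) = D1 ?b ?c t * (\<Prod>i\<in>{1..<N} - {k}. D1 ?b ?c (y i))"
    proof -
      have "(\<Prod>i\<in>{1..<N}. D1 ?b ?c ((y(k:=t)) i)) = D1 ?b ?c ((y(k:=t)) k) * (\<Prod>i\<in>{1..<N} - {k}. D1 ?b ?c ((y(k:=t)) i))"
        by (rule prod.remove) (use k in auto)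
      also have "(\<Prod>i\<in>{1..<N} - {k}. D1 ?b ?c ((y(k:=t)) i)) = (\<Prod>i\<in>{1..<N} - {k}. D1 ?b ?c (y i))"
        by (rule prod.cong) auto
      finally show ?thesis by simp
    qed
    also have "(C * exp (\<bar>Im v\<bar> / h * (N * ?K))) * (D1 ?b ?c t * (\<Prod>i\<in>{1..<N} - {k}. D1 ?b ?c (y i))) = ?C * D1 ?b ?c t"
      by (simp only: mult_ac)
    finally show "norm (Qker h N v x (y(k:=t)) * g (y(k:=t))) \<le> ?C * D1 ?b ?c t" .
  qed
qed

lemma line_int:
  assumes g: "Nice g" and k: "k \<in> {1..<N}"
  shows "integrable lborel (\<lambda>t. Qker h N v x (y(k:=t)) * g (y(k:=t)))"
proof -
  obtain C b c where c: "c > 0" and B: "\<And>t. norm (Qker h N v x (y(k:=t)) * g (y(k:=t))) \<le> C * D1 b c t"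
    using line_bound[OF g k] by blast
  have i: "integrable lborel (\<lambda>t. C * D1 b c t)" by (intro integrable_mult_right D1_int c)
  have "continuous_on UNIV (\<lambda>y. Qker h N v x y * g y)"
    by (intro continuous_intros Qker_cont) (use g in \<open>auto simp: Nice_def\<close>)
  from cont_line[OF this] have "continuous_on UNIV (\<lambda>t. Qker h N v x (y(k:=t)) * g (y(k:=t)))" .
  then have m: "(\<lambda>t. Qker h N v x (y(k:=t)) * g (y(k:=t))) \<in> borel_measurable lborel"
    unfolding measurable_lborel2 by (rule borel_measurable_continuous_onI)
  show ?thesis by (rule Bochner_Integration.integrable_bound[OF i m]) (auto intro!: AE_I2 order_trans[OF B])
qed

lemma line_lim:
  assumes g: "Nice g" and k: "k \<in> {1..<N}"
  shows "((\<lambda>t. Qker h N v x (y(k:=t)) * g (y(k:=t))) \<longlongrightarrow> 0) at_top"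
    "((\<lambda>t. Qker h N v x (y(k:=t)) * g (y(k:=t))) \<longlongrightarrow> 0) at_bot"
proof -
  obtain C b c where c: "c > 0" and B: "\<And>t. norm (Qker h N v x (y(k:=t)) * g (y(k:=t))) \<le> C * D1 b c t"
    using line_bound[OF g k] by blast
  show "((\<lambda>t. Qker h N v x (y(k:=t)) * g (y(k:=t))) \<longlongrightarrow> 0) at_top"
    by (rule Lim_null_comparison[OF always_eventually[OF allI[OF B]]]) (use tendsto_mult_right_zero[OF D1_lim(1)[OF c]] in simp)
  show "((\<lambda>t. Qker h N v x (y(k:=t)) * g (y(k:=t))) \<longlongrightarrow> 0) at_bot"
    by (rule Lim_null_comparison[OF always_eventually[OF allI[OF B]]]) (use tendsto_mult_right_zero[OF D1_lim(2)[OF c]] in simp)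
qed

end

context toda begin

lemma bdZ: assumes "k \<in> {1..<N}"
  shows "(u - v) - al x y k + be x y k = u - \<i> * of_real h * dZy k x y"
proof -
  have h0: "(of_real h :: complex) \<noteq> 0" using hpos by simp
  show ?thesis using assms h0 unfolding al_def be_def dZy_def
    by (simp add: field_simps)
qed

lemma be_al: assumes "Suc (Suc n) < N"
  shows "be x y (Suc n) * al x y (Suc (Suc n)) = - of_real (exp (y (Suc n) - y (Suc (Suc n))))"
proof -
  have "exp (y (Suc n) - x (Suc (Suc n))) * exp (x (Suc (Suc n)) - y (Suc (Suc n))) = exp (y (Suc n) - y (Suc (Suc n)))"
    by (simp add: exp_add[symmetric])
  then have "(of_real (exp (y (Suc n) - x (Suc (Suc n)))) :: complex) * of_real (exp (x (Suc (Suc n)) - y (Suc (Suc n)))) = of_real (exp (y (Suc n) - y (Suc (Suc n))))"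
    by (simp only: of_real_mult[symmetric])
  then show ?thesis using assms unfolding al_def be_def by (simp add: algebra_simps)
qed

lemma dZy_indep: "j \<noteq> k \<Longrightarrow> dZy k x (y(j:=t)) = dZy k x y"
  unfolding dZy_def by simp

lemma IBP:
  assumes k: "k \<in> {1..<N}" and m: "Nice m" and mind: "\<And>y t. m (y(k:=t)) = m y"
    and G: "Nice G" and G': "Nice G'" and D: "\<And>y. ((\<lambda>t. G (y(k:=t))) has_vector_derivative G' y) (at (y k))"
  shows "(\<integral>y. Qker h N v x y * (m y * G' y) \<partial>MM) = - (\<integral>y. Qker h N v x y * (dZy k x y * m y * G y) \<partial>MM)"
proof -
  have n1: "Nice (\<lambda>y. m y * G' y)" using m G' by (rule Nice_mult)
  have n2: "Nice (\<lambda>y. dZy k x y * m y * G y)" by (intro Nice_mult Nice_dZy k m G)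
  have n0: "Nice (\<lambda>y. m y * G y)" using m G by (rule Nice_mult)
  have n12: "Nice (\<lambda>y. m y * G' y + dZy k x y * m y * G y)" using n1 n2 by (rule Nice_add)
  have "integral\<^sup>L MM (\<lambda>y. Qker h N v x y * (m y * G' y + dZy k x y * m y * G y)) = 0"
  proof (rule IBP0[where \<phi>="\<lambda>y. Qker h N v x y * (m y * G y)"])
    show "k \<in> {1..<N}" by fact
    show "integrable MM (\<lambda>y. Qker h N v x y * (m y * G' y + dZy k x y * m y * G y))"
      by (rule int_QN[OF n12])
    fix y :: "nat \<Rightarrow> real"
    show "((\<lambda>s. Qker h N v x (y(k:=s)) * (m (y(k:=s)) * G (y(k:=s)))) has_vector_derivative
        Qker h N v x (y(k:=t)) * (m (y(k:=t)) * G' (y(k:=t)) + dZy k x (y(k:=t)) * m (y(k:=t)) * G (y(k:=t)))) (at t)" for t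
    proof -
      have DG: "((\<lambda>s. G (y(k:=s))) has_vector_derivative G' (y(k:=t))) (at t)" using D[of "y(k:=t)"] by simp
      have DQ: "((\<lambda>s. Qker h N v x (y(k:=s))) has_vector_derivative (dZy k x (y(k:=t)) * Qker h N v x (y(k:=t)))) (at t)"
        by (rule dQy[OF k])
      have "((\<lambda>s. Qker h N v x (y(k:=s)) * (m y * G (y(k:=s)))) has_vector_derivative
          Qker h N v x (y(k:=t)) * (m y * G' (y(k:=t))) + (dZy k x (y(k:=t)) * Qker h N v x (y(k:=t))) * (m y * G (y(k:=t)))) (at t)"
        by (intro has_vector_derivative_mult has_vector_derivative_mult_right DQ DG)
      then show ?thesis unfolding mind by (simp add: algebra_simps)
    qed
    have "continuous_on UNIV (\<lambda>y. Qker h N v x y * (m y * G' y + dZy k x y * m y * G y))"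
      using continuous_on_mult[OF Qker_cont[of x] conjunct1[OF n12[unfolded Nice_def]]] .
    then show "continuous_on UNIV (\<lambda>t. Qker h N v x (y(k:=t)) * (m (y(k:=t)) * G' (y(k:=t)) + dZy k x (y(k:=t)) * m (y(k:=t)) * G (y(k:=t))))"
      by (rule cont_line)
    show "integrable lborel (\<lambda>t. Qker h N v x (y(k:=t)) * (m (y(k:=t)) * G' (y(k:=t)) + dZy k x (y(k:=t)) * m (y(k:=t)) * G (y(k:=t))))"
      by (rule line_int[OF n12 k])
    show "((\<lambda>t. Qker h N v x (y(k:=t)) * (m (y(k:=t)) * G (y(k:=t)))) \<longlongrightarrow> 0) at_top"
      by (rule line_lim(1)[OF n0 k])
    show "((\<lambda>t. Qker h N v x (y(k:=t)) * (m (y(k:=t)) * G (y(k:=t)))) \<longlongrightarrow> 0) at_bot"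
      by (rule line_lim(2)[OF n0 k])
  qed
  then show ?thesis using integral_QN_add[OF n1 n2, of x] by (simp add: eq_neg_iff_add_eq_0)
qed

end

context toda begin

lemma Nice_Aop: "n \<le> N - 1 \<Longrightarrow> Nice (Aop h n u f)"
  using Gd_nice[OF Aop_Gd] by blast

lemma partY:
  "n \<le> N - 1 \<Longrightarrow> Nice m \<Longrightarrow> (\<And>y j t. 1 \<le> j \<Longrightarrow> j \<le> n \<Longrightarrow> m (y(j:=t)) = m y) \<Longrightarrow>
   (\<integral>y. Qker h N v x y * (m y * Aop h n u f y) \<partial>MM) = (\<integral>y. Qker h N v x y * (m y * Tg (u - v) (al x y) (be x y) n * f y) \<partial>MM)"
proof (induction n arbitrary: m rule: induct012)
  case 1
  then show ?case by simp
next
  case (2 m)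
  have f0: "Gd 0 f" using Gd.base[of "[]" 0] by simp
  from Gd_deriv[OF f0] 2(1) have D: "\<And>y. ((\<lambda>t. f (y(1:=t))) has_vector_derivative pd 1 f y) (at (y 1))"
    and G1: "Gd 1 (pd 1 f)" by auto
  have nf: "Nice f" using Gd_nice[OF f0] by simp
  have np: "Nice (pd 1 f)" using Gd_nice[OF G1] 2(1) by simp
  have m: "Nice m" by fact
  have k: "1 \<in> {1..<N}" using N2 by auto
  have ibp: "(\<integral>y. Qker h N v x y * (m y * pd 1 f y) \<partial>MM) = - (\<integral>y. Qker h N v x y * (dZy 1 x y * m y * f y) \<partial>MM)"
    by (rule IBP[OF k m _ nf np D]) (rule 2(3), auto)
  have nmf: "Nice (\<lambda>y. m y * f y)" by (intro Nice_mult m nf)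
  have nmp: "Nice (\<lambda>y. m y * pd 1 f y)" by (intro Nice_mult m np)
  have ndmf: "Nice (\<lambda>y. dZy 1 x y * m y * f y)" by (intro Nice_mult Nice_dZy k m nf)
  have "(\<integral>y. Qker h N v x y * (m y * Aop h (Suc 0) u f y) \<partial>MM)
      = (\<integral>y. Qker h N v x y * (u * (m y * f y) + (\<i> * of_real h) * (m y * pd 1 f y)) \<partial>MM)"
    by (simp add: algebra_simps)
  also have "\<dots> = u * (\<integral>y. Qker h N v x y * (m y * f y) \<partial>MM) + (\<i> * of_real h) * (\<integral>y. Qker h N v x y * (m y * pd 1 f y) \<partial>MM)"
    using integral_QN_add[OF Nice_mult[OF Nice_const[of u] nmf] Nice_mult[OF Nice_const[of "\<i> * of_real h"] nmp], of x]
      integral_QN_cmult[of x u] integral_QN_cmult[of x "\<i> * of_real h"] by simp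
  also have "\<dots> = u * (\<integral>y. Qker h N v x y * (m y * f y) \<partial>MM) - (\<i> * of_real h) * (\<integral>y. Qker h N v x y * (dZy 1 x y * m y * f y) \<partial>MM)"
    unfolding ibp by simp
  also have "\<dots> = (\<integral>y. Qker h N v x y * (u * (m y * f y) - (\<i> * of_real h) * (dZy 1 x y * m y * f y)) \<partial>MM)"
    using integral_QN_diff[OF Nice_mult[OF Nice_const[of u] nmf] Nice_mult[OF Nice_const[of "\<i> * of_real h"] ndmf], of x]
      integral_QN_cmult[of x u] integral_QN_cmult[of x "\<i> * of_real h"] by simp
  also have "\<dots> = (\<integral>y. Qker h N v x y * (m y * Tg (u - v) (al x y) (be x y) (Suc 0) * f y) \<partial>MM)"
  proof -
    have "u * (m y * f y) - (\<i> * of_real h) * (dZy 1 x y * m y * f y) = m y * Tg (u - v) (al x y) (be x y) (Suc 0) * f y" for y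
    proof -
      have T1: "Tg (u - v) (al x y) (be x y) (Suc 0) = u - \<i> * of_real h * dZy 1 x y"
        using bdZ[OF k, of x y] by simp
      show ?thesis by (simp only: T1) (simp add: algebra_simps)
    qed
    then show ?thesis by simp
  qed
  finally show ?case .
next
  case (3 n m)
  let ?k = "Suc (Suc n)"
  let ?A1 = "Aop h (Suc n) u f" and ?A0 = "Aop h n u f"
  let ?T = "\<lambda>j y. Tg (u - v) (al x y) (be x y) j"
  let ?e = "\<lambda>y. of_real (exp (y (Suc n) - y (Suc (Suc n)))) :: complex"
  have le: "Suc (Suc n) \<le> N - 1" by fact
  have k: "?k \<in> {1..<N}" using le by auto
  have GA1: "Gd (Suc n) ?A1" using le by (intro Aop_Gd) auto
  from Gd_deriv[OF GA1] le have D: "\<And>y. ((\<lambda>t. ?A1 (y(?k:=t))) has_vector_derivative pd ?k ?A1 y) (at (y ?k))"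
    and GpA: "Gd ?k (pd ?k ?A1)" by auto
  have nA1: "Nice ?A1" using le by (intro Nice_Aop) auto
  have nA0: "Nice ?A0" using le by (intro Nice_Aop) auto
  have npA: "Nice (pd ?k ?A1)" using Gd_nice[OF GpA] le by simp
  have m: "Nice m" by fact
  have mind: "\<And>y j t. 1 \<le> j \<Longrightarrow> j \<le> ?k \<Longrightarrow> m (y(j:=t)) = m y" by fact
  have ne: "Nice ?e" by (rule Nice_exp_yy) (use le in auto)
  have ndz: "Nice (\<lambda>y. dZy ?k x y)" by (rule Nice_dZy[OF k])
  define m1 where "m1 y = m y * (u - \<i> * of_real h * dZy ?k x y)" for y
  define m2 where "m2 y = m y * ?e y" for y
  have nm1: "Nice m1" unfolding m1_def by (intro Nice_mult Nice_diff Nice_const m ndz)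
  have nm2: "Nice m2" unfolding m2_def by (intro Nice_mult m ne)
  have IH1: "(\<integral>y. Qker h N v x y * (m1 y * ?A1 y) \<partial>MM) = (\<integral>y. Qker h N v x y * (m1 y * ?T (Suc n) y * f y) \<partial>MM)"
  proof (rule 3(2)[OF _ nm1])
    show "Suc n \<le> N - 1" using le by simp
    fix y j t assume j: "1 \<le> j" "j \<le> Suc n"
    then show "m1 (y(j:=t)) = m1 y" unfolding m1_def using mind[of j y t] dZy_indep[of j ?k x y t] by auto
  qed
  have IH0: "(\<integral>y. Qker h N v x y * (m2 y * ?A0 y) \<partial>MM) = (\<integral>y. Qker h N v x y * (m2 y * ?T n y * f y) \<partial>MM)"
  proof (rule 3(1)[OF _ nm2])
    show "n \<le> N - 1" using le by simp
    fix y j t assume j: "1 \<le> j" "j \<le> n"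
    then show "m2 (y(j:=t)) = m2 y" unfolding m2_def using mind[of j y t] by auto
  qed
  have ibp: "(\<integral>y. Qker h N v x y * (m y * pd ?k ?A1 y) \<partial>MM) = - (\<integral>y. Qker h N v x y * (dZy ?k x y * m y * ?A1 y) \<partial>MM)"
    by (rule IBP[OF k m _ nA1 npA D]) (use mind in auto)
  have nmA1: "Nice (\<lambda>y. m y * ?A1 y)" by (intro Nice_mult m nA1)
  have nmpA: "Nice (\<lambda>y. m y * pd ?k ?A1 y)" by (intro Nice_mult m npA)
  have ndmA: "Nice (\<lambda>y. dZy ?k x y * m y * ?A1 y)" by (intro Nice_mult ndz m nA1)
  have nm2A0: "Nice (\<lambda>y. m2 y * ?A0 y)" by (intro Nice_mult nm2 nA0)
  have nm1T: "Nice (\<lambda>y. m1 y * ?T (Suc n) y * f y)"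
    by (intro Nice_mult nm1 Nice_Tg) (use Gd_nice[OF Gd.base[of "[]" 0]] in simp)
  have nm2T: "Nice (\<lambda>y. m2 y * ?T n y * f y)"
    by (intro Nice_mult nm2 Nice_Tg) (use Gd_nice[OF Gd.base[of "[]" 0]] in simp)
  have "(\<integral>y. Qker h N v x y * (m y * Aop h ?k u f y) \<partial>MM)
      = (\<integral>y. Qker h N v x y * ((u * (m y * ?A1 y) + (\<i> * of_real h) * (m y * pd ?k ?A1 y)) - m2 y * ?A0 y) \<partial>MM)"
    unfolding m2_def by (simp add: algebra_simps)
  also have "\<dots> = (u * (\<integral>y. Qker h N v x y * (m y * ?A1 y) \<partial>MM) + (\<i> * of_real h) * (\<integral>y. Qker h N v x y * (m y * pd ?k ?A1 y) \<partial>MM))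
      - (\<integral>y. Qker h N v x y * (m2 y * ?A0 y) \<partial>MM)"
    using integral_QN_diff[OF Nice_add[OF Nice_mult[OF Nice_const[of u] nmA1] Nice_mult[OF Nice_const[of "\<i> * of_real h"] nmpA]] nm2A0, of x]
      integral_QN_add[OF Nice_mult[OF Nice_const[of u] nmA1] Nice_mult[OF Nice_const[of "\<i> * of_real h"] nmpA], of x]
      integral_QN_cmult[of x u "\<lambda>y. m y * ?A1 y"] integral_QN_cmult[of x "\<i> * of_real h" "\<lambda>y. m y * pd ?k ?A1 y"] by simp
  also have "\<dots> = (u * (\<integral>y. Qker h N v x y * (m y * ?A1 y) \<partial>MM) - (\<i> * of_real h) * (\<integral>y. Qker h N v x y * (dZy ?k x y * m y * ?A1 y) \<partial>MM))
      - (\<integral>y. Qker h N v x y * (m2 y * ?A0 y) \<partial>MM)"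
    unfolding ibp by simp
  also have "u * (\<integral>y. Qker h N v x y * (m y * ?A1 y) \<partial>MM) - (\<i> * of_real h) * (\<integral>y. Qker h N v x y * (dZy ?k x y * m y * ?A1 y) \<partial>MM)
      = (\<integral>y. Qker h N v x y * (m1 y * ?A1 y) \<partial>MM)"
  proof -
    have "(\<integral>y. Qker h N v x y * (m1 y * ?A1 y) \<partial>MM) = (\<integral>y. Qker h N v x y * (u * (m y * ?A1 y) - (\<i> * of_real h) * (dZy ?k x y * m y * ?A1 y)) \<partial>MM)"
      unfolding m1_def by (simp add: algebra_simps)
    also have "\<dots> = u * (\<integral>y. Qker h N v x y * (m y * ?A1 y) \<partial>MM) - (\<i> * of_real h) * (\<integral>y. Qker h N v x y * (dZy ?k x y * m y * ?A1 y) \<partial>MM)"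
      using integral_QN_diff[OF Nice_mult[OF Nice_const[of u] nmA1] Nice_mult[OF Nice_const[of "\<i> * of_real h"] ndmA], of x]
        integral_QN_cmult[of x u "\<lambda>y. m y * ?A1 y"] integral_QN_cmult[of x "\<i> * of_real h" "\<lambda>y. dZy ?k x y * m y * ?A1 y"] by simp
    finally show ?thesis by simp
  qed
  also have "(\<integral>y. Qker h N v x y * (m1 y * ?A1 y) \<partial>MM) - (\<integral>y. Qker h N v x y * (m2 y * ?A0 y) \<partial>MM)
      = (\<integral>y. Qker h N v x y * (m1 y * ?T (Suc n) y * f y) \<partial>MM) - (\<integral>y. Qker h N v x y * (m2 y * ?T n y * f y) \<partial>MM)"
    unfolding IH1 IH0 ..
  also have "\<dots> = (\<integral>y. Qker h N v x y * (m1 y * ?T (Suc n) y * f y - m2 y * ?T n y * f y) \<partial>MM)"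
    by (rule integral_QN_diff[symmetric, OF nm1T nm2T])
  also have "\<dots> = (\<integral>y. Qker h N v x y * (m y * ?T ?k y * f y) \<partial>MM)"
  proof -
    have "m1 y * ?T (Suc n) y * f y - m2 y * ?T n y * f y = m y * ?T ?k y * f y" for y
    proof -
      have b: "(u - v) - al x y ?k + be x y ?k = u - \<i> * of_real h * dZy ?k x y" by (rule bdZ[OF k])
      have c: "be x y (Suc n) * al x y ?k = - ?e y" by (rule be_al) (use le in auto)
      have "?T ?k y = ((u - v) - al x y ?k + be x y ?k) * ?T (Suc n) y + be x y (Suc n) * al x y ?k * ?T n y"
        by simp
      also have "\<dots> = (u - \<i> * of_real h * dZy ?k x y) * ?T (Suc n) y - ?e y * ?T n y"
        unfolding b c by simp
      finally have T2: "?T ?k y = (u - \<i> * of_real h * dZy ?k x y) * ?T (Suc n) y - ?e y * ?T n y" .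
      show ?thesis unfolding m1_def m2_def by (simp only: T2) (simp add: algebra_simps)
    qed
    then show ?thesis by simp
  qed
  finally show ?case .
qed

end

lemma Pg_cong: "(\<And>j. j \<le> n \<Longrightarrow> a j = a' j) \<Longrightarrow> (\<And>j. j < n \<Longrightarrow> b j = b' j) \<Longrightarrow> Pg w a b n = Pg w a' b' n"
proof (induction n rule: induct012)
  case 1 then show ?case by simp
next
  case 2 then show ?case by simp
next
  case (3 n)
  have "Pg w a b n = Pg w a' b' n" by (rule 3(1)) (use 3(3,4) in auto)
  moreover have "Pg w a b (Suc n) = Pg w a' b' (Suc n)" by (rule 3(2)) (use 3(3,4) in auto)
  ultimately show ?case using 3(3)[of "Suc n"] 3(3)[of "Suc (Suc n)"] 3(4)[of "Suc n"] by simp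
qed

context toda begin

lemma aX: assumes "k \<in> {1..N}"
  shows "u + \<i> * of_real h * dZx k x y = (u - v) - al x y k + be x y (k - 1)"
proof -
  have h0: "(of_real h :: complex) \<noteq> 0" using hpos by simp
  show ?thesis using assms h0 unfolding al_def be_def dZx_def
    by (auto simp: field_simps)
qed

lemma ex_al_be: assumes "Suc (Suc n) \<le> N"
  shows "- of_real (exp (x (Suc n) - x (Suc (Suc n)))) = al x y (Suc n) * be x y (Suc n)"
proof -
  have "exp (x (Suc n) - y (Suc n)) * exp (y (Suc n) - x (Suc (Suc n))) = exp (x (Suc n) - x (Suc (Suc n)))"
    by (simp add: exp_add[symmetric])
  then have "(of_real (exp (x (Suc n) - y (Suc n))) :: complex) * of_real (exp (y (Suc n) - x (Suc (Suc n)))) = of_real (exp (x (Suc n) - x (Suc (Suc n))))"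
    by (simp only: of_real_mult[symmetric])
  then show ?thesis using assms unfolding al_def be_def by (simp add: algebra_simps)
qed

lemma Nice_dZx: assumes k: "k \<in> {1..N}" shows "Nice (\<lambda>y. dZx k x y)"
proof -
  have A: "Nice (\<lambda>y. (if k < N then of_real (exp (x k - y k)) else 0) :: complex)"
    by (cases "k < N") (use k in \<open>auto intro: Nice_const Nice_exp_xy\<close>)
  have B: "Nice (\<lambda>y. (if 2 \<le> k then of_real (exp (y (k - 1) - x k)) else 0) :: complex)"
  proof (cases "2 \<le> k")
    case True
    then have km: "k - 1 \<in> {1..<N}" using k by auto
    show ?thesis using True Nice_exp_xy(2)[OF km, of "x k"] by simp
  qed (simp add: Nice_const)
  have "Nice (\<lambda>y. \<i> * v / of_real h - of_real (1/h) * ((if k < N then of_real (exp (x k - y k)) else 0) - (if 2 \<le> k then of_real (exp (y (k - 1) - x k)) else 0)))"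
    by (intro Nice_diff Nice_mult Nice_const A B)
  moreover have "(\<lambda>y. \<i> * v / of_real h - of_real (1/h) * ((if k < N then of_real (exp (x k - y k)) else 0) - (if 2 \<le> k then of_real (exp (y (k - 1) - x k)) else 0)))
      = (\<lambda>y. dZx k x y)"
    unfolding dZx_def by (rule ext) simp
  ultimately show ?thesis by simp
qed

lemma dZx_bound:
  fixes K :: real
  assumes k: "k \<in> {1..N}" and K: "\<And>j. j \<in> {1..N} \<Longrightarrow> \<bar>x j\<bar> \<le> K"
  shows "norm (dZx k x y) \<le> (norm v / h + 2 * exp K / h) * exp (1 * Sy y)"
proof -
  let ?A = "if k < N then exp (x k - y k) else 0" and ?B = "if 2 \<le> k then exp (y (k - 1) - x k) else 0"
  have S: "exp (Sy y) \<ge> 1" using Sy_nonneg by simp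
  have A: "?A \<le> exp K * exp (Sy y)" "?A \<ge> 0"
  proof -
    show "?A \<ge> 0" by simp
    show "?A \<le> exp K * exp (Sy y)"
    proof (cases "k < N")
      case True
      then have "x k - y k \<le> K + Sy y" using K[of k] k abs_le_Sy[of k y] by auto
      then show ?thesis using True by (simp add: exp_add[symmetric])
    qed (simp)
  qed
  have B: "?B \<le> exp K * exp (Sy y)" "?B \<ge> 0"
  proof -
    show "?B \<ge> 0" by simp
    show "?B \<le> exp K * exp (Sy y)"
    proof (cases "2 \<le> k")
      case True
      then have km: "k - 1 \<in> {1..<N}" using k by auto
      then have "y (k - 1) - x k \<le> K + Sy y" using K[of k] k abs_le_Sy[OF km, of y] by auto
      then show ?thesis using True by (simp add: exp_add[symmetric])
    qed (simp)
  qed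
  have "norm (dZx k x y) \<le> norm (\<i> * v / of_real h) + norm (of_real ((1/h) * (?A - ?B)) :: complex)"
    unfolding dZx_def by (rule norm_triangle_ineq4)
  also have "norm (\<i> * v / of_real h) = norm v / h" using hpos by (simp add: norm_divide norm_mult)
  also have "norm (of_real ((1/h) * (?A - ?B)) :: complex) = \<bar>?A - ?B\<bar> / h"
    using hpos by (simp only: norm_of_real abs_mult, simp)
  also have "\<bar>?A - ?B\<bar> \<le> 2 * exp K * exp (Sy y)" using A B by linarith
  then have "\<bar>?A - ?B\<bar> / h \<le> 2 * exp K * exp (Sy y) / h" using hpos by (simp add: divide_right_mono)
  finally have "norm (dZx k x y) \<le> norm v / h + 2 * exp K * exp (Sy y) / h" by simp
  also have "\<dots> \<le> norm v / h * exp (Sy y) + 2 * exp K * exp (Sy y) / h"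
    using S hpos by (simp add: mult_left_mono[of 1 "exp (Sy y)" "norm v / h", simplified])
  also have "\<dots> = (norm v / h + 2 * exp K / h) * exp (1 * Sy y)" by (simp add: algebra_simps)
  finally show ?thesis .
qed

end

context toda begin

lemma pd_Qint:
  assumes k: "k \<in> {1..N}" and g: "Nice g"
  shows "((\<lambda>t. \<integral>y. Qker h N v (x0(k:=t)) y * g y \<partial>MM) has_vector_derivative (\<integral>y. Qker h N v x0 y * (dZx k x0 y * g y) \<partial>MM)) (at (x0 k))"
proof -
  obtain Cg ag where Bg: "\<And>y. norm (g y) \<le> Cg * exp (ag * Sy y)" using g unfolding Nice_def EB_def by blast
  have Cg0: "Cg \<ge> 0" using EB_C_nonneg Bg by blast
  define K where "K = (\<Sum>j=1..N. \<bar>x0 j\<bar>) + 1"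
  define Cd where "Cd = norm v / h + 2 * exp K / h"
  have Kt: "\<bar>(x0(k:=t)) j\<bar> \<le> K" if t: "dist t (x0 k) < 1" and j: "j \<in> {1..N}" for t j
  proof (cases "j = k")
    case True
    have "\<bar>t\<bar> \<le> \<bar>x0 k\<bar> + 1" using t unfolding dist_real_def by linarith
    also have "\<bar>x0 k\<bar> \<le> (\<Sum>j=1..N. \<bar>x0 j\<bar>)" by (rule Kx[OF k])
    finally show ?thesis using True unfolding K_def by simp
  next
    case False
    have "\<bar>x0 j\<bar> \<le> (\<Sum>j=1..N. \<bar>x0 j\<bar>)" by (rule Kx[OF j])
    then show ?thesis using False unfolding K_def by simp
  qed
  have Bdg: "norm (dZx k (x0(k:=t)) y * g y) \<le> (Cd * Cg) * exp ((1 + ag) * Sy y)" if t: "dist t (x0 k) < 1" for t y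
  proof -
    have "norm (dZx k (x0(k:=t)) y * g y) \<le> (Cd * exp (1 * Sy y)) * (Cg * exp (ag * Sy y))"
      unfolding norm_mult Cd_def
      by (intro mult_mono dZx_bound[OF k] Kt[OF t] Bg) (use Cg0 hpos in \<open>auto intro!: mult_nonneg_nonneg add_nonneg_nonneg\<close>)
    also have "\<dots> = (Cd * Cg) * exp ((1 + ag) * Sy y)" by (simp add: algebra_simps exp_add)
    finally show ?thesis .
  qed
  define D where "D y = ((Cd * Cg) * exp (\<bar>Im v\<bar> / h * (N * K))) * (\<Prod>i\<in>{1..<N}. D1 ((1 + ag) + \<bar>Im v\<bar> / h) (exp (-K) / h) (y i))" for y
  have bnd: "norm (Qker h N v (x0(k:=t)) y * (dZx k (x0(k:=t)) y * g y)) \<le> D y" if t: "dist t (x0 k) < 1" for t y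
    unfolding D_def by (rule dom_QF[where F="\<lambda>y. dZx k (x0(k:=t)) y * g y" and x="x0(k:=t)" and K=K, OF Kt[OF t] Bdg[OF t]])
  have intD: "integrable MM D" unfolding D_def by (intro integrable_mult_right int_prodD1) (use hpos in simp)
  have ndg: "\<And>x. Nice (\<lambda>y. dZx k x y * g y)" by (intro Nice_mult Nice_dZx k g)
  have "((\<lambda>t. \<integral>y. Qker h N v (x0(k:=t)) y * g y \<partial>MM) has_vector_derivative
      (\<integral>y. Qker h N v (x0(k:=x0 k)) y * (dZx k (x0(k:=x0 k)) y * g y) \<partial>MM)) (at (x0 k))"
  proof (rule deriv_integral[where H="\<lambda>t y. Qker h N v (x0(k:=t)) y * g y"
        and H'="\<lambda>t y. Qker h N v (x0(k:=t)) y * (dZx k (x0(k:=t)) y * g y)" and D=D and M=MM and ?t0.0="x0 k"])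
    show "\<And>t. (\<lambda>y. Qker h N v (x0(k:=t)) y * g y) \<in> borel_measurable MM"
      using int_QN[OF g] by (rule borel_measurable_integrable)
    show "(\<lambda>y. Qker h N v (x0(k:=x0 k)) y * (dZx k (x0(k:=x0 k)) y * g y)) \<in> borel_measurable MM"
      using int_QN[OF ndg] by (rule borel_measurable_integrable)
    show "\<And>t. integrable MM (\<lambda>y. Qker h N v (x0(k:=t)) y * g y)" by (rule int_QN[OF g])
    show "integrable MM D" by (rule intD)
    show "((\<lambda>s. Qker h N v (x0(k:=s)) y * g y) has_vector_derivative Qker h N v (x0(k:=t)) y * (dZx k (x0(k:=t)) y * g y)) (at t)" for t y
      using has_vector_derivative_mult_left[OF dQx[OF k, of x0 y t], of "g y"] by (simp add: algebra_simps)
    show "norm (Qker h N v (x0(k:=t)) y * (dZx k (x0(k:=t)) y * g y)) \<le> D y" if "dist t (x0 k) < 1" for t y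
      by (rule bnd[OF that])
  qed
  then show ?thesis by simp
qed

lemma pd_Qint2:
  assumes k: "k \<in> {1..N}" and R: "\<And>x. Nice (R x)" and ind: "\<And>x t y. R (x(k:=t)) y = R x y"
  shows "pd k (\<lambda>x. \<integral>y. Qker h N v x y * R x y \<partial>MM) x0 = (\<integral>y. Qker h N v x0 y * (dZx k x0 y * R x0 y) \<partial>MM)"
proof -
  have "(\<lambda>t. (\<lambda>x. \<integral>y. Qker h N v x y * R x y \<partial>MM) (x0(k:=t))) = (\<lambda>t. \<integral>y. Qker h N v (x0(k:=t)) y * R x0 y \<partial>MM)"
    using ind by simp
  then show ?thesis unfolding pd_def using vector_derivative_at[OF pd_Qint[OF k R]] by simp
qed

lemma PX_indep: "n < k \<Longrightarrow> Pg w (al (x(k:=t)) y) (be (x(k:=t)) y) n = Pg w (al x y) (be x y) n"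
  by (rule Pg_cong) (auto simp: al_def be_def)

lemma nf: "Nice f" using Gd_nice[OF Gd.base[of "[]" 0]] by simp

lemma partX:
  "n \<le> N \<Longrightarrow> Aop h n u (Qop h N v f) = (\<lambda>x. \<integral>y. Qker h N v x y * (Pg (u - v) (al x y) (be x y) n * f y) \<partial>MM)"
proof (induction n rule: induct012)
  case 1
  show ?case by (simp add: Qop_def)
next
  case 2
  have k: "1 \<in> {1..N}" using N2 by auto
  show ?case
  proof (rule ext)
    fix x
    have pd1: "pd 1 (Qop h N v f) x = (\<integral>y. Qker h N v x y * (dZx 1 x y * f y) \<partial>MM)"
      unfolding Qop_def by (rule pd_Qint2[OF k nf]) simp
    have ndf: "Nice (\<lambda>y. dZx 1 x y * f y)" by (intro Nice_mult Nice_dZx k nf)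
    have "Aop h (Suc 0) u (Qop h N v f) x = u * (\<integral>y. Qker h N v x y * f y \<partial>MM) + (\<i> * of_real h) * (\<integral>y. Qker h N v x y * (dZx 1 x y * f y) \<partial>MM)"
      using pd1 by (simp add: Qop_def)
    also have "\<dots> = (\<integral>y. Qker h N v x y * (u * f y + (\<i> * of_real h) * (dZx 1 x y * f y)) \<partial>MM)"
      using integral_QN_add[OF Nice_mult[OF Nice_const[of u] nf] Nice_mult[OF Nice_const[of "\<i> * of_real h"] ndf], of x]
        integral_QN_cmult[of x u f] integral_QN_cmult[of x "\<i> * of_real h" "\<lambda>y. dZx 1 x y * f y"] by simp
    also have "\<dots> = (\<integral>y. Qker h N v x y * (Pg (u - v) (al x y) (be x y) (Suc 0) * f y) \<partial>MM)"
    proof -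
      have "u * f y + (\<i> * of_real h) * (dZx 1 x y * f y) = Pg (u - v) (al x y) (be x y) (Suc 0) * f y" for y
      proof -
        have P1: "Pg (u - v) (al x y) (be x y) (Suc 0) = u + \<i> * of_real h * dZx 1 x y"
          using aX[OF k, of x y] by simp
        show ?thesis by (simp only: P1) (simp add: algebra_simps)
      qed
      then show ?thesis by simp
    qed
    finally show "Aop h (Suc 0) u (Qop h N v f) x = (\<integral>y. Qker h N v x y * (Pg (u - v) (al x y) (be x y) (Suc 0) * f y) \<partial>MM)" .
  qed
next
  case (3 n)
  let ?P = "\<lambda>j x y. Pg (u - v) (al x y) (be x y) j"
  let ?k = "Suc (Suc n)"
  have le: "?k \<le> N" by fact
  have k: "?k \<in> {1..N}" using le by auto
  have IH1: "Aop h (Suc n) u (Qop h N v f) = (\<lambda>x. \<integral>y. Qker h N v x y * (?P (Suc n) x y * f y) \<partial>MM)"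
    using 3 by simp
  have IH0: "Aop h n u (Qop h N v f) = (\<lambda>x. \<integral>y. Qker h N v x y * (?P n x y * f y) \<partial>MM)"
    using 3 by simp
  show ?case
  proof (rule ext)
    fix x
    let ?e = "of_real (exp (x (Suc n) - x (Suc (Suc n)))) :: complex"
    have nP1: "Nice (\<lambda>y. ?P (Suc n) x y * f y)" by (intro Nice_mult Nice_Pg nf)
    have nP0: "Nice (\<lambda>y. ?P n x y * f y)" by (intro Nice_mult Nice_Pg nf)
    have ndP: "Nice (\<lambda>y. dZx ?k x y * (?P (Suc n) x y * f y))" by (intro Nice_mult Nice_dZx k Nice_Pg nf)
    have pdk: "pd ?k (\<lambda>x. \<integral>y. Qker h N v x y * (?P (Suc n) x y * f y) \<partial>MM) x = (\<integral>y. Qker h N v x y * (dZx ?k x y * (?P (Suc n) x y * f y)) \<partial>MM)"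
      by (rule pd_Qint2[OF k]) (auto intro: Nice_mult Nice_Pg nf simp: PX_indep)
    have "Aop h ?k u (Qop h N v f) x = (u * (\<integral>y. Qker h N v x y * (?P (Suc n) x y * f y) \<partial>MM)
        + (\<i> * of_real h) * (\<integral>y. Qker h N v x y * (dZx ?k x y * (?P (Suc n) x y * f y)) \<partial>MM))
        - ?e * (\<integral>y. Qker h N v x y * (?P n x y * f y) \<partial>MM)"
      by (simp only: Aop.simps IH1 IH0 pdk)
    also have "\<dots> = (\<integral>y. Qker h N v x y * ((u * (?P (Suc n) x y * f y) + (\<i> * of_real h) * (dZx ?k x y * (?P (Suc n) x y * f y))) - ?e * (?P n x y * f y)) \<partial>MM)"
      using integral_QN_diff[OF Nice_add[OF Nice_mult[OF Nice_const[of u] nP1] Nice_mult[OF Nice_const[of "\<i> * of_real h"] ndP]] Nice_mult[OF Nice_const[of ?e] nP0], of x]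
        integral_QN_add[OF Nice_mult[OF Nice_const[of u] nP1] Nice_mult[OF Nice_const[of "\<i> * of_real h"] ndP], of x]
        integral_QN_cmult[of x u "\<lambda>y. ?P (Suc n) x y * f y"] integral_QN_cmult[of x "\<i> * of_real h" "\<lambda>y. dZx ?k x y * (?P (Suc n) x y * f y)"]
        integral_QN_cmult[of x ?e "\<lambda>y. ?P n x y * f y"] by simp
    also have "\<dots> = (\<integral>y. Qker h N v x y * (?P ?k x y * f y) \<partial>MM)"
    proof -
      have "(u * (?P (Suc n) x y * f y) + (\<i> * of_real h) * (dZx ?k x y * (?P (Suc n) x y * f y))) - ?e * (?P n x y * f y) = ?P ?k x y * f y" for y
      proof -
        have a: "u + \<i> * of_real h * dZx ?k x y = (u - v) - al x y ?k + be x y (Suc n)"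
          using aX[OF k, of x y] by simp
        have c: "- ?e = al x y (Suc n) * be x y (Suc n)" by (rule ex_al_be[OF le])
        have "?P ?k x y = ((u - v) - al x y ?k + be x y (Suc n)) * ?P (Suc n) x y + al x y (Suc n) * be x y (Suc n) * ?P n x y"
          by simp
        also have "\<dots> = (u + \<i> * of_real h * dZx ?k x y) * ?P (Suc n) x y - ?e * ?P n x y"
          unfolding a[symmetric] c[symmetric] by simp
        finally have P2: "?P ?k x y = (u + \<i> * of_real h * dZx ?k x y) * ?P (Suc n) x y - ?e * ?P n x y" .
        show ?thesis by (simp only: P2) (simp add: algebra_simps)
      qed
      then show ?thesis by simp
    qed
    finally show "Aop h ?k u (Qop h N v f) x = (\<integral>y. Qker h N v x y * (?P ?k x y * f y) \<partial>MM)" .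
  qed
qed

end

theorem lemma2:
  fixes N :: nat and h :: real and v u :: complex and f :: "(nat \<Rightarrow> real) \<Rightarrow> complex"
  assumes N: "N \<ge> 2" and h: "h > 0"
    and dep: "\<And>y y'. (\<forall>i\<in>{1..<N}. y i = y' i) \<Longrightarrow> f y = f y'"
    and diff: "\<And>ks k y. set ks \<subseteq> {1..<N} \<Longrightarrow> length ks < N - 1 \<Longrightarrow> k \<in> {1..<N} \<Longrightarrow>
                 (\<lambda>t. pds ks f (y(k := t))) differentiable (at (y k))"
    and cont: "\<And>ks. set ks \<subseteq> {1..<N} \<Longrightarrow> length ks \<le> N - 1 \<Longrightarrow> continuous_on UNIV (pds ks f)"
    and growth: "\<And>ks. set ks \<subseteq> {1..<N} \<Longrightarrow> length ks \<le> N - 1 \<Longrightarrow>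
                 \<exists>C a. \<forall>y. norm (pds ks f y) \<le> C * exp (a * (\<Sum>i=1..<N. \<bar>y i\<bar>))"
  shows "Aop h N u (Qop h N v f) x = (u - v) * Qop h N v (Aop h (N - 1) u f) x"
proof -
  interpret toda N h v f u
    by unfold_locales (use N h diff cont growth in auto)
  have NS: "N = Suc (N - 1)" using N by simp
  have PN: "Pg (u - v) (al x y) (be x y) N = (u - v) * Tg (u - v) (al x y) (be x y) (N - 1)" for y
  proof -
    have "Pg (u - v) (al x y) (be x y) (Suc (N - 1)) = (u - v - al x y (Suc (N - 1))) * Tg (u - v) (al x y) (be x y) (N - 1)
        + al x y (Suc (N - 1)) * be x y (N - 1) * (if N - 1 = 0 then 0 else Tg (u - v) (al x y) (be x y) (N - 1 - 1))"
      by (rule PT_identity) (simp add: be_def)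
    moreover have "al x y (Suc (N - 1)) = 0" using NS by (simp add: al_def)
    ultimately show ?thesis using NS by simp
  qed
  have "Aop h N u (Qop h N v f) x = (\<integral>y. Qker h N v x y * (Pg (u - v) (al x y) (be x y) N * f y) \<partial>MM)"
    using partX[of N] by simp
  also have "\<dots> = (\<integral>y. Qker h N v x y * ((u - v) * (Tg (u - v) (al x y) (be x y) (N - 1) * f y)) \<partial>MM)"
    by (simp add: PN mult.assoc)
  also have "\<dots> = (u - v) * (\<integral>y. Qker h N v x y * (Tg (u - v) (al x y) (be x y) (N - 1) * f y) \<partial>MM)"
    by (rule integral_QN_cmult)
  also have "(\<integral>y. Qker h N v x y * (Tg (u - v) (al x y) (be x y) (N - 1) * f y) \<partial>MM)
      = (\<integral>y. Qker h N v x y * ((\<lambda>_. 1) y * Tg (u - v) (al x y) (be x y) (N - 1) * f y) \<partial>MM)"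
    by simp
  also have "\<dots> = (\<integral>y. Qker h N v x y * ((\<lambda>_. 1) y * Aop h (N - 1) u f y) \<partial>MM)"
    by (rule partY[symmetric]) (auto intro: Nice_const)
  also have "\<dots> = Qop h N v (Aop h (N - 1) u f) x"
    by (simp add: Qop_def)
  finally show ?thesis .
qed

end
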